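(* If $E$ is an operator space such that $E'$ has the $C$-W*CBAP, then $E$ has the $C$-W*CBAP.
   Context: An operator space $X$ has the $C$-W*CBAP if there is a net of finite-rank maps $\phi_i:X\to X''$ with $\|\phi_i\|_{cb}\le C$ for all $i$ and $\phi_i(x)\to\kappa_X(x)$ in the weak$^*$ topology for every $x\in X$, where $\kappa_X:X\to X''$ is the canonical embedding; $E'$ carries the standard dual operator space structure. *)

theory Defs
  imports "HOL-Analysis.Analysis"
begin

text \<open>An operator space is given by a carrier set with complex vector space
operations together with norms on the n x n matrices over it
(matrices are functions nat => nat => 'a, only entries with indices below n matter).\<close>

record 'a opsp =
  os_carrier :: "'a set"
  os_zero :: 'a
  os_add :: "'a \<Rightarrow> 'a \<Rightarrow> 'a"
  os_smul :: "complex \<Rightarrow> 'a \<Rightarrow> 'a"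
  os_mnorm :: "nat \<Rightarrow> (nat \<Rightarrow> nat \<Rightarrow> 'a) \<Rightarrow> real"

primrec vsumN :: "'a opsp \<Rightarrow> (nat \<Rightarrow> 'a) \<Rightarrow> nat \<Rightarrow> 'a" where
  "vsumN V f 0 = os_zero V"
| "vsumN V f (Suc n) = os_add V (vsumN V f n) (f n)"

definition lincomb :: "'a opsp \<Rightarrow> complex list \<Rightarrow> 'a list \<Rightarrow> 'a" where
  "lincomb V cs bs = vsumN V (\<lambda>k. os_smul V (cs ! k) (bs ! k)) (length bs)"

definition vector_space_on :: "'a opsp \<Rightarrow> bool" where
  "vector_space_on V \<longleftrightarrow>
     (let C = os_carrier V; ad = os_add V; sm = os_smul V; z = os_zero V in
      z \<in> C \<and> (\<forall>x\<in>C. \<forall>y\<in>C. ad x y \<in> C) \<and> (\<forall>c. \<forall>x\<in>C. sm c x \<in> C) \<and>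
      (\<forall>x\<in>C. \<forall>y\<in>C. \<forall>w\<in>C. ad (ad x y) w = ad x (ad y w)) \<and>
      (\<forall>x\<in>C. \<forall>y\<in>C. ad x y = ad y x) \<and>
      (\<forall>x\<in>C. ad z x = x) \<and>
      (\<forall>x\<in>C. \<exists>y\<in>C. ad x y = z) \<and>
      (\<forall>c. \<forall>x\<in>C. \<forall>y\<in>C. sm c (ad x y) = ad (sm c x) (sm c y)) \<and>
      (\<forall>c d. \<forall>x\<in>C. sm (c + d) x = ad (sm c x) (sm d x)) \<and>
      (\<forall>c d. \<forall>x\<in>C. sm (c * d) x = sm c (sm d x)) \<and>
      (\<forall>x\<in>C. sm 1 x = x))"

definition mat_in :: "'a opsp \<Rightarrow> nat \<Rightarrow> (nat \<Rightarrow> nat \<Rightarrow> 'a) \<Rightarrow> bool" where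
  "mat_in V n X \<longleftrightarrow> (\<forall>i<n. \<forall>j<n. X i j \<in> os_carrier V)"

definition cmat_norm :: "nat \<Rightarrow> nat \<Rightarrow> (nat \<Rightarrow> nat \<Rightarrow> complex) \<Rightarrow> real" where
  "cmat_norm r c A = Sup (insert 0
     {sqrt (\<Sum>i<r. (cmod (\<Sum>j<c. A i j * v j))\<^sup>2) | v. (\<Sum>j<c. (cmod (v j))\<^sup>2) \<le> 1})"

definition block_diag :: "'a opsp \<Rightarrow> nat \<Rightarrow> (nat \<Rightarrow> nat \<Rightarrow> 'a) \<Rightarrow> (nat \<Rightarrow> nat \<Rightarrow> 'a) \<Rightarrow> nat \<Rightarrow> nat \<Rightarrow> 'a" where
  "block_diag V n X Y = (\<lambda>i j. if i < n \<and> j < n then X i j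
                             else if n \<le> i \<and> n \<le> j then Y (i - n) (j - n) else os_zero V)"

definition mtriple :: "'a opsp \<Rightarrow> nat \<Rightarrow> (nat \<Rightarrow> nat \<Rightarrow> complex) \<Rightarrow> (nat \<Rightarrow> nat \<Rightarrow> 'a)
                        \<Rightarrow> (nat \<Rightarrow> nat \<Rightarrow> complex) \<Rightarrow> nat \<Rightarrow> nat \<Rightarrow> 'a" where
  "mtriple V m \<alpha> X \<beta> = (\<lambda>i j. vsumN V (\<lambda>k. vsumN V (\<lambda>l. os_smul V (\<alpha> i k * \<beta> l j) (X k l)) m) m)"

definition operator_space :: "'a opsp \<Rightarrow> bool" where
  "operator_space V \<longleftrightarrow>
     vector_space_on V \<and>
     (\<forall>n X Y. (\<forall>i<n. \<forall>j<n. X i j = Y i j) \<longrightarrow> os_mnorm V n X = os_mnorm V n Y) \<and>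
     (\<forall>n X. mat_in V n X \<longrightarrow> 0 \<le> os_mnorm V n X) \<and>
     (\<forall>n X. mat_in V n X \<longrightarrow> (os_mnorm V n X = 0 \<longleftrightarrow> (\<forall>i<n. \<forall>j<n. X i j = os_zero V))) \<and>
     (\<forall>n X Y. mat_in V n X \<and> mat_in V n Y \<longrightarrow>
        os_mnorm V n (\<lambda>i j. os_add V (X i j) (Y i j)) \<le> os_mnorm V n X + os_mnorm V n Y) \<and>
     (\<forall>n c X. mat_in V n X \<longrightarrow>
        os_mnorm V n (\<lambda>i j. os_smul V c (X i j)) = cmod c * os_mnorm V n X) \<and>
     (\<forall>n m X Y. mat_in V n X \<and> mat_in V m Y \<longrightarrow>
        os_mnorm V (n + m) (block_diag V n X Y) = max (os_mnorm V n X) (os_mnorm V m Y)) \<and>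
     (\<forall>n m \<alpha> X \<beta>. mat_in V m X \<longrightarrow>
        os_mnorm V n (mtriple V m \<alpha> X \<beta>) \<le> cmat_norm n m \<alpha> * os_mnorm V m X * cmat_norm m n \<beta>)"

definition lin_fun :: "'a opsp \<Rightarrow> ('a \<Rightarrow> complex) \<Rightarrow> bool" where
  "lin_fun V f \<longleftrightarrow> (\<forall>x\<in>os_carrier V. \<forall>y\<in>os_carrier V. f (os_add V x y) = f x + f y) \<and>
                   (\<forall>c. \<forall>x\<in>os_carrier V. f (os_smul V c x) = c * f x)"

definition dual_carrier :: "'a opsp \<Rightarrow> ('a \<Rightarrow> complex) set" where
  "dual_carrier V = {f. lin_fun V f \<and>
      (\<exists>K. \<forall>x\<in>os_carrier V. cmod (f x) \<le> K * os_mnorm V 1 (\<lambda>_ _. x)) \<and>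
      (\<forall>x. x \<notin> os_carrier V \<longrightarrow> f x = 0)}"

text \<open>M_n(V') = CB(V, M_n) isometrically: the norm of [f_ij] is the cb norm of
 x |-> [f_ij(x)], computed via M_n(M_m) = M_(nm).\<close>
definition dual_mnorm :: "'a opsp \<Rightarrow> nat \<Rightarrow> (nat \<Rightarrow> nat \<Rightarrow> ('a \<Rightarrow> complex)) \<Rightarrow> real" where
  "dual_mnorm V n F = Sup (insert 0
     {cmat_norm (n * m) (n * m) (\<lambda>p q. F (p div m) (q div m) (X (p mod m) (q mod m))) | m X.
        0 < m \<and> mat_in V m X \<and> os_mnorm V m X \<le> 1})"

definition dual :: "'a opsp \<Rightarrow> ('a \<Rightarrow> complex) opsp" where
  "dual V = \<lparr> os_carrier = dual_carrier V, os_zero = (\<lambda>_. 0),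
              os_add = (\<lambda>f g x. f x + g x), os_smul = (\<lambda>c f x. c * f x),
              os_mnorm = dual_mnorm V \<rparr>"

definition kappa :: "'a opsp \<Rightarrow> 'a \<Rightarrow> ('a \<Rightarrow> complex) \<Rightarrow> complex" where
  "kappa V x = (\<lambda>f. if f \<in> dual_carrier V then f x else 0)"

definition lin_map :: "'a opsp \<Rightarrow> 'b opsp \<Rightarrow> ('a \<Rightarrow> 'b) \<Rightarrow> bool" where
  "lin_map V W \<phi> \<longleftrightarrow> (\<forall>x\<in>os_carrier V. \<phi> x \<in> os_carrier W) \<and>
     (\<forall>x\<in>os_carrier V. \<forall>y\<in>os_carrier V. \<phi> (os_add V x y) = os_add W (\<phi> x) (\<phi> y)) \<and>
     (\<forall>c. \<forall>x\<in>os_carrier V. \<phi> (os_smul V c x) = os_smul W c (\<phi> x))"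

definition cb_le :: "'a opsp \<Rightarrow> 'b opsp \<Rightarrow> real \<Rightarrow> ('a \<Rightarrow> 'b) \<Rightarrow> bool" where
  "cb_le V W C \<phi> \<longleftrightarrow> (\<forall>n X. mat_in V n X \<longrightarrow>
      os_mnorm W n (\<lambda>i j. \<phi> (X i j)) \<le> C * os_mnorm V n X)"

definition finite_rank :: "'a opsp \<Rightarrow> 'b opsp \<Rightarrow> ('a \<Rightarrow> 'b) \<Rightarrow> bool" where
  "finite_rank V W \<phi> \<longleftrightarrow> (\<exists>bs. set bs \<subseteq> os_carrier W \<and>
      (\<forall>x\<in>os_carrier V. \<exists>cs. length cs = length bs \<and> \<phi> x = lincomb W cs bs))"

text \<open>C-W*CBAP: a net (here: a proper filter on the maps) of finite-rank maps
 V -> V'' with cb norm at most C converging weak* pointwise to the canonical embedding.\<close>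
definition W_CBAP :: "'a opsp \<Rightarrow> real \<Rightarrow> bool" where
  "W_CBAP V C \<longleftrightarrow> (\<exists>F :: ('a \<Rightarrow> (('a \<Rightarrow> complex) \<Rightarrow> complex)) filter. F \<noteq> bot \<and>
     (\<forall>\<^sub>F \<phi> in F. lin_map V (dual (dual V)) \<phi> \<and> finite_rank V (dual (dual V)) \<phi> \<and>
                  cb_le V (dual (dual V)) C \<phi>) \<and>
     (\<forall>x\<in>os_carrier V. \<forall>f\<in>dual_carrier V. ((\<lambda>\<phi>. \<phi> x f) \<longlongrightarrow> kappa V x f) F))"

end

theory Submission
  imports Defs "HOL-Analysis.Analysis"
begin

locale nsp =
  fixes V :: "'a opsp"
  assumes OSV: "operator_space V"
begin

abbreviation "CC \<equiv> os_carrier V"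
abbreviation "ad \<equiv> os_add V"
abbreviation "sm \<equiv> os_smul V"
abbreviation "zz \<equiv> os_zero V"
definition pn :: "'a \<Rightarrow> real" where "pn y = os_mnorm V 1 (\<lambda>_ _. y)"
definition smr :: "real \<Rightarrow> 'a \<Rightarrow> 'a" where "smr r y = sm (complex_of_real r) y"

lemma VS: "vector_space_on V" using OSV unfolding operator_space_def by blast

lemma zero_in: "zz \<in> CC" using VS unfolding vector_space_on_def Let_def by (elim conjE) assumption
lemma add_in': "\<forall>x\<in>CC. \<forall>y\<in>CC. ad x y \<in> CC" using VS unfolding vector_space_on_def Let_def by (elim conjE) assumption
lemma add_in: "y \<in> CC \<Longrightarrow> w \<in> CC \<Longrightarrow> ad y w \<in> CC" using add_in' by blast
lemma sm_in': "\<forall>c. \<forall>x\<in>CC. sm c x \<in> CC" using VS unfolding vector_space_on_def Let_def by (elim conjE) assumption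
lemma sm_in: "y \<in> CC \<Longrightarrow> sm c y \<in> CC" using sm_in' by blast
lemma smr_in: "y \<in> CC \<Longrightarrow> smr r y \<in> CC" unfolding smr_def by (rule sm_in)
lemma add_assoc': "\<forall>x\<in>CC. \<forall>y\<in>CC. \<forall>w\<in>CC. ad (ad x y) w = ad x (ad y w)"
  using VS unfolding vector_space_on_def Let_def by (elim conjE) assumption
lemma add_assoc: "y \<in> CC \<Longrightarrow> w \<in> CC \<Longrightarrow> u \<in> CC \<Longrightarrow> ad (ad y w) u = ad y (ad w u)"
  using add_assoc' by blast
lemma add_comm': "\<forall>x\<in>CC. \<forall>y\<in>CC. ad x y = ad y x"
  using VS unfolding vector_space_on_def Let_def by (elim conjE) assumption
lemma add_comm: "y \<in> CC \<Longrightarrow> w \<in> CC \<Longrightarrow> ad y w = ad w y"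
  using add_comm' by blast
lemma zero_left': "\<forall>x\<in>CC. ad zz x = x"
  using VS unfolding vector_space_on_def Let_def by (elim conjE) assumption
lemma zero_left: "y \<in> CC \<Longrightarrow> ad zz y = y"
  using zero_left' by blast
lemma zero_right: "y \<in> CC \<Longrightarrow> ad y zz = y"
  using zero_left add_comm zero_in by metis
lemma sm_dv': "\<forall>c. \<forall>x\<in>CC. \<forall>y\<in>CC. sm c (ad x y) = ad (sm c x) (sm c y)"
  using VS unfolding vector_space_on_def Let_def by (elim conjE) assumption
lemma sm_dv: "y \<in> CC \<Longrightarrow> w \<in> CC \<Longrightarrow> sm c (ad y w) = ad (sm c y) (sm c w)"
  using sm_dv' by blast
lemma sm_ds': "\<forall>c d. \<forall>x\<in>CC. sm (c + d) x = ad (sm c x) (sm d x)"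
  using VS unfolding vector_space_on_def Let_def by (elim conjE) assumption
lemma sm_ds: "y \<in> CC \<Longrightarrow> sm (c + d) y = ad (sm c y) (sm d y)"
  using sm_ds' by blast
lemma sm_assoc': "\<forall>c d. \<forall>x\<in>CC. sm (c * d) x = sm c (sm d x)"
  using VS unfolding vector_space_on_def Let_def by (elim conjE) assumption
lemma sm_assoc: "y \<in> CC \<Longrightarrow> sm (c * d) y = sm c (sm d y)"
  using sm_assoc' by blast
lemma sm_one': "\<forall>x\<in>CC. sm 1 x = x"
  using VS unfolding vector_space_on_def Let_def by (elim conjE) assumption
lemma sm_one: "y \<in> CC \<Longrightarrow> sm 1 y = y"
  using sm_one' by blast

lemma mat1: "y \<in> CC \<Longrightarrow> mat_in V 1 (\<lambda>_ _. y)" by (simp add: mat_in_def)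

lemma pn_nonneg: "y \<in> CC \<Longrightarrow> 0 \<le> pn y"
proof -
  assume y: "y \<in> CC"
  have "\<forall>n X. mat_in V n X \<longrightarrow> 0 \<le> os_mnorm V n X" using OSV unfolding operator_space_def by (elim conjE) assumption
  then show ?thesis using mat1[OF y] unfolding pn_def by blast
qed

lemma pn_zero: "y \<in> CC \<Longrightarrow> pn y = 0 \<longleftrightarrow> y = zz"
proof -
  assume y: "y \<in> CC"
  have "\<forall>n X. mat_in V n X \<longrightarrow> (os_mnorm V n X = 0 \<longleftrightarrow> (\<forall>i<n. \<forall>j<n. X i j = os_zero V))"
    using OSV unfolding operator_space_def by (elim conjE) assumption
  then show ?thesis using mat1[OF y] unfolding pn_def by auto
qed

lemma pn_tri: "y \<in> CC \<Longrightarrow> w \<in> CC \<Longrightarrow> pn (ad y w) \<le> pn y + pn w"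
proof -
  assume y: "y \<in> CC" and w: "w \<in> CC"
  have "\<forall>n X Y. mat_in V n X \<and> mat_in V n Y \<longrightarrow>
        os_mnorm V n (\<lambda>i j. os_add V (X i j) (Y i j)) \<le> os_mnorm V n X + os_mnorm V n Y"
    using OSV unfolding operator_space_def by (elim conjE) assumption
  then show ?thesis using mat1[OF y] mat1[OF w] unfolding pn_def by blast
qed

lemma pn_hom: "y \<in> CC \<Longrightarrow> pn (sm c y) = cmod c * pn y"
proof -
  assume y: "y \<in> CC"
  have "\<forall>n c X. mat_in V n X \<longrightarrow> os_mnorm V n (\<lambda>i j. os_smul V c (X i j)) = cmod c * os_mnorm V n X"
    using OSV unfolding operator_space_def by (elim conjE) assumption
  then show ?thesis using mat1[OF y] unfolding pn_def by blast
qed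

lemma pn_homr: "y \<in> CC \<Longrightarrow> pn (smr r y) = \<bar>r\<bar> * pn y"
  unfolding smr_def by (simp add: pn_hom)

lemma sm_0: assumes y: "y \<in> CC" shows "sm 0 y = zz"
proof -
  have "pn (sm 0 y) = 0" by (simp add: pn_hom y)
  then show ?thesis using pn_zero[OF sm_in[OF y]] by blast
qed

lemma smr_0: "y \<in> CC \<Longrightarrow> smr 0 y = zz" unfolding smr_def by (simp add: sm_0)

lemma sm_zero: "sm c zz = zz"
proof -
  have "pn zz = 0" using pn_zero[OF zero_in] by simp
  then have "pn (sm c zz) = 0" by (simp add: pn_hom zero_in)
  then show ?thesis using pn_zero[OF sm_in[OF zero_in]] by blast
qed

lemma smr_add: "y \<in> CC \<Longrightarrow> ad (smr r y) (smr s y) = smr (r + s) y"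
  unfolding smr_def by (simp add: sm_ds)

lemma smr_smr: "y \<in> CC \<Longrightarrow> smr r (smr s y) = smr (r * s) y"
  unfolding smr_def by (simp add: sm_assoc)

lemma smr_1: "y \<in> CC \<Longrightarrow> smr 1 y = y" unfolding smr_def by (simp add: sm_one)

lemma smr_dv: "y \<in> CC \<Longrightarrow> w \<in> CC \<Longrightarrow> smr r (ad y w) = ad (smr r y) (smr r w)"
  unfolding smr_def by (rule sm_dv)

lemma neg_r: "y \<in> CC \<Longrightarrow> ad y (smr (-1) y) = zz"
  using smr_add[of y 1 "-1"] smr_1 smr_0 by simp

lemma cancel: assumes "a \<in> CC" "b \<in> CC" "c \<in> CC" "ad a b = ad a c" shows "b = c"
proof -
  have "ad (smr (-1) a) (ad a b) = ad (smr (-1) a) (ad a c)" using assms(4) by simp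
  moreover have "ad (smr (-1) a) (ad a y) = y" if "y \<in> CC" for y
  proof -
    have "ad (smr (-1) a) (ad a y) = ad (ad (smr (-1) a) a) y" using add_assoc smr_in assms(1) that by simp
    also have "ad (smr (-1) a) a = zz" using neg_r[OF assms(1)] add_comm smr_in assms(1) by metis
    finally show ?thesis using zero_left that by simp
  qed
  ultimately show ?thesis using assms by metis
qed

lemma add4: assumes "a \<in> CC" "b \<in> CC" "c \<in> CC" "d \<in> CC"
  shows "ad (ad a b) (ad c d) = ad (ad a c) (ad b d)"
proof -
  have "ad (ad a b) (ad c d) = ad a (ad b (ad c d))" using assms by (simp add: add_assoc add_in)
  also have "ad b (ad c d) = ad c (ad b d)"
    using assms by (metis add_assoc add_comm)
  also have "ad a (ad c (ad b d)) = ad (ad a c) (ad b d)" using assms by (simp add: add_assoc add_in)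
  finally show ?thesis .
qed

end

context nsp
begin

definition goodG :: "'a \<Rightarrow> ('a \<times> real) set \<Rightarrow> bool" where
 "goodG x0 G \<longleftrightarrow> fst ` G \<subseteq> CC \<and> (\<forall>y a b. (y,a)\<in>G \<longrightarrow> (y,b)\<in>G \<longrightarrow> a = b) \<and>
   (\<forall>y a w b. (y,a)\<in>G \<longrightarrow> (w,b)\<in>G \<longrightarrow> (ad y w, a+b)\<in>G) \<and>
   (\<forall>r y a. (y,a)\<in>G \<longrightarrow> (smr r y, r*a)\<in>G) \<and> (\<forall>y a. (y,a)\<in>G \<longrightarrow> a \<le> pn y) \<and> (x0, pn x0) \<in> G"

lemma goodG_dom: "goodG x0 G \<Longrightarrow> (y,a) \<in> G \<Longrightarrow> y \<in> CC" unfolding goodG_def by (simp add: image_subset_iff) (metis fst_conv)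
lemma goodG_fun: "goodG x0 G \<Longrightarrow> (y,a) \<in> G \<Longrightarrow> (y,b) \<in> G \<Longrightarrow> a = b" unfolding goodG_def by simp
lemma goodG_add: "goodG x0 G \<Longrightarrow> (y,a) \<in> G \<Longrightarrow> (w,b) \<in> G \<Longrightarrow> (ad y w, a+b) \<in> G" unfolding goodG_def by simp
lemma goodG_smr: "goodG x0 G \<Longrightarrow> (y,a) \<in> G \<Longrightarrow> (smr r y, r*a) \<in> G" unfolding goodG_def by simp
lemma goodG_le: "goodG x0 G \<Longrightarrow> (y,a) \<in> G \<Longrightarrow> a \<le> pn y" unfolding goodG_def by simp
lemma goodG_x0: "goodG x0 G \<Longrightarrow> (x0, pn x0) \<in> G" unfolding goodG_def by simp
lemma goodG_zero: assumes "goodG x0 G" "x0 \<in> CC" shows "(zz, 0) \<in> G"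
proof -
  have "(smr 0 x0, 0 * pn x0) \<in> G" by (rule goodG_smr[OF assms(1) goodG_x0[OF assms(1)]])
  then show ?thesis using smr_0[OF assms(2)] by simp
qed

lemma G0_good: assumes x0: "x0 \<in> CC" "x0 \<noteq> zz"
  shows "goodG x0 {(smr r x0, r * pn x0) | r. True}"
proof -
  have px: "0 < pn x0" using pn_zero[OF x0(1)] pn_nonneg[OF x0(1)] x0(2) by linarith
  have inj: "r = s" if e: "smr r x0 = smr s x0" for r s
  proof -
    have "smr (r - s) x0 = ad (smr r x0) (smr (-s) x0)" using smr_add[OF x0(1), of r "-s"] by simp
    also have "\<dots> = ad (smr s x0) (smr (-s) x0)" by (simp only: e)
    also have "\<dots> = smr (s + -s) x0" by (rule smr_add[OF x0(1)])
    also have "\<dots> = zz" using smr_0[OF x0(1)] by simp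
    finally have "pn (smr (r - s) x0) = 0" using pn_zero[OF zero_in] by simp
    then have "\<bar>r - s\<bar> * pn x0 = 0" using pn_homr[OF x0(1)] by simp
    then show ?thesis using px by simp
  qed
  show ?thesis unfolding goodG_def
  proof (intro conjI allI impI)
    show "fst ` {(smr r x0, r * pn x0) |r. True} \<subseteq> CC" using smr_in[OF x0(1)] by force
    show "a = b" if h: "(y, a) \<in> {(smr r x0, r * pn x0) |r. True}" "(y, b) \<in> {(smr r x0, r * pn x0) |r. True}" for y a b
    proof -
      obtain r where r: "y = smr r x0" "a = r * pn x0" using h(1) by blast
      obtain s where s: "y = smr s x0" "b = s * pn x0" using h(2) by blast
      have "r = s" using inj r(1) s(1) by simp
      then show ?thesis using r s by simp
    qed
    show "(ad y w, a + b) \<in> {(smr r x0, r * pn x0) |r. True}"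
      if h: "(y, a) \<in> {(smr r x0, r * pn x0) |r. True}" "(w, b) \<in> {(smr r x0, r * pn x0) |r. True}" for y a w b
    proof -
      obtain r where r: "y = smr r x0" "a = r * pn x0" using h(1) by blast
      obtain s where s: "w = smr s x0" "b = s * pn x0" using h(2) by blast
      have "(ad y w, a + b) = (smr (r+s) x0, (r+s) * pn x0)" using r s smr_add[OF x0(1), of r s] by (simp add: algebra_simps)
      then show ?thesis by blast
    qed
    show "(smr t y, t * a) \<in> {(smr r x0, r * pn x0) |r. True}" if h: "(y, a) \<in> {(smr r x0, r * pn x0) |r. True}" for t y a
    proof -
      obtain r where r: "y = smr r x0" "a = r * pn x0" using h by blast
      have "(smr t y, t * a) = (smr (t*r) x0, (t*r) * pn x0)" using r smr_smr[OF x0(1), of t r] by simp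
      then show ?thesis by blast
    qed
    show "a \<le> pn y" if h: "(y, a) \<in> {(smr r x0, r * pn x0) |r. True}" for y a
    proof -
      obtain r where "y = smr r x0" "a = r * pn x0" using h by blast
      moreover have "r * pn x0 \<le> \<bar>r\<bar> * pn x0" by (rule mult_right_mono[OF abs_ge_self pn_nonneg[OF x0(1)]])
      ultimately show ?thesis using pn_homr[OF x0(1), of r] by simp
    qed
    have "(x0, pn x0) = (smr 1 x0, 1 * pn x0)" using smr_1[OF x0(1)] by simp
    then show "(x0, pn x0) \<in> {(smr r x0, r * pn x0) |r. True}" by blast
  qed
qed

lemma chain_good: assumes C: "C \<in> chains {G. goodG x0 G}" and ne: "C \<noteq> {}"
  shows "goodG x0 (\<Union>C)"
proof -
  have Cg: "\<And>G. G \<in> C \<Longrightarrow> goodG x0 G" using C unfolding chains_def by blast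
  have ch: "\<And>G H. G \<in> C \<Longrightarrow> H \<in> C \<Longrightarrow> G \<subseteq> H \<or> H \<subseteq> G" using C unfolding chains_def chain_subset_def by blast
  have two: "\<exists>G\<in>C. p \<in> G \<and> q \<in> G" if h: "p \<in> \<Union>C" "q \<in> \<Union>C" for p q
  proof -
    obtain G H where "G \<in> C" "H \<in> C" "p \<in> G" "q \<in> H" using h by blast
    then show ?thesis using ch[of G H] by blast
  qed
  show ?thesis unfolding goodG_def
  proof (intro conjI allI impI)
    show "fst ` \<Union>C \<subseteq> CC" using Cg goodG_dom by fastforce
    show "a = b" if h: "(y, a) \<in> \<Union>C" "(y, b) \<in> \<Union>C" for y a b
    proof -
      obtain G where "G \<in> C" "(y,a) \<in> G" "(y,b) \<in> G" using two[OF h] by blast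
      then show ?thesis using Cg goodG_fun by blast
    qed
    show "(ad y w, a + b) \<in> \<Union>C" if h: "(y, a) \<in> \<Union>C" "(w, b) \<in> \<Union>C" for y a w b
    proof -
      obtain G where "G \<in> C" "(y,a) \<in> G" "(w,b) \<in> G" using two[OF h] by blast
      then show ?thesis using Cg goodG_add by blast
    qed
    show "(smr r y, r * a) \<in> \<Union>C" if "(y, a) \<in> \<Union>C" for r y a
      using that Cg goodG_smr by blast
    show "a \<le> pn y" if "(y, a) \<in> \<Union>C" for y a
      using that Cg goodG_le by blast
    show "(x0, pn x0) \<in> \<Union>C" using ne Cg goodG_x0 by blast
  qed
qed

end

context nsp
begin

lemma negy: "y \<in> CC \<Longrightarrow> ad (smr (-1) y) y = zz"
  using neg_r add_comm smr_in by metis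

lemma extend:
  assumes M: "goodG x0 M" and x0: "x0 \<in> CC" and y: "y \<in> CC" and ny: "y \<notin> fst ` M"
  shows "\<exists>M'. goodG x0 M' \<and> M \<subseteq> M' \<and> y \<in> fst ` M'"
proof -
  have Mc: "m \<in> CC" if "(m,a) \<in> M" for m a using goodG_dom[OF M that] .
  have z0: "(zz, 0) \<in> M" by (rule goodG_zero[OF M x0])
  have yn: "smr (-1) y \<in> CC" using smr_in[OF y] .
  have key: "a1 - pn (ad m1 (smr (-1) y)) \<le> pn (ad m2 y) - a2" if h1: "(m1,a1) \<in> M" and h2: "(m2,a2) \<in> M" for m1 a1 m2 a2
  proof -
    have m1: "m1 \<in> CC" and m2: "m2 \<in> CC" using Mc h1 h2 by auto
    have "a1 + a2 \<le> pn (ad m1 m2)" using goodG_le[OF M goodG_add[OF M h1 h2]] .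
    also have "ad m1 m2 = ad (ad m1 (smr (-1) y)) (ad m2 y)"
    proof -
      have "ad (ad m1 (smr (-1) y)) (ad m2 y) = ad (ad m1 m2) (ad (smr (-1) y) y)" by (rule add4[OF m1 yn m2 y])
      also have "\<dots> = ad m1 m2" using negy[OF y] zero_right[OF add_in[OF m1 m2]] by simp
      finally show ?thesis by simp
    qed
    also have "pn \<dots> \<le> pn (ad m1 (smr (-1) y)) + pn (ad m2 y)" by (rule pn_tri[OF add_in[OF m1 yn] add_in[OF m2 y]])
    finally show ?thesis by simp
  qed
  define L where "L = {b - pn (ad m (smr (-1) y)) | m b. (m,b) \<in> M}"
  have Lne: "L \<noteq> {}" using z0 unfolding L_def by blast
  have Lbdd: "bdd_above L"
  proof -
    have "\<forall>l\<in>L. l \<le> pn (ad zz y) - 0" unfolding L_def using key[OF _ z0] by blast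
    then show ?thesis unfolding bdd_above_def by blast
  qed
  define c where "c = Sup L"
  have cU: "b - pn (ad m (smr (-1) y)) \<le> c" if "(m,b) \<in> M" for m b
    unfolding c_def by (rule cSup_upper[OF _ Lbdd]) (use that in \<open>auto simp: L_def\<close>)
  have cL: "c \<le> pn (ad m y) - b" if h: "(m,b) \<in> M" for m b
    unfolding c_def by (rule cSup_least[OF Lne]) (use key[OF _ h] in \<open>auto simp: L_def\<close>)
  define M' where "M' = {(ad m (smr t y), a + t*c) | m a t. (m,a) \<in> M}"
  have memM': "(ad m (smr t y), a + t*c) \<in> M'" if "(m,a) \<in> M" for m a t
    unfolding M'_def using that by blast
  have M'E: "\<exists>m a t. (m,a) \<in> M \<and> u = ad m (smr t y) \<and> b = a + t*c" if "(u,b) \<in> M'" for u b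
    using that unfolding M'_def by blast
  have sub: "M \<subseteq> M'"
  proof
    fix p assume p: "p \<in> M"
    obtain m a where pm: "p = (m,a)" by (cases p)
    have "(ad m (smr 0 y), a + 0*c) \<in> M'" by (rule memM') (use p pm in simp)
    moreover have "ad m (smr 0 y) = m" using smr_0[OF y] zero_right Mc p pm by simp
    ultimately show "p \<in> M'" using pm by simp
  qed
  have yin: "y \<in> fst ` M'"
  proof -
    have "(ad zz (smr 1 y), 0 + 1*c) \<in> M'" by (rule memM'[OF z0])
    moreover have "ad zz (smr 1 y) = y" using smr_1[OF y] zero_left[OF y] by simp
    ultimately show ?thesis by force
  qed
  have good: "goodG x0 M'"
    unfolding goodG_def
  proof (intro conjI allI impI)
    show "fst ` M' \<subseteq> CC"
    proof
      fix u assume "u \<in> fst ` M'"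
      then obtain b where "(u,b) \<in> M'" by force
      then obtain m a t where "(m,a) \<in> M" "u = ad m (smr t y)" using M'E by blast
      then show "u \<in> CC" using Mc add_in smr_in[OF y] by blast
    qed
  next
    fix u a' b' assume h1: "(u,a') \<in> M'" and h2: "(u,b') \<in> M'"
    obtain m1 a1 t1 where r1: "(m1,a1) \<in> M" "u = ad m1 (smr t1 y)" "a' = a1 + t1*c" using M'E[OF h1] by blast
    obtain m2 a2 t2 where r2: "(m2,a2) \<in> M" "u = ad m2 (smr t2 y)" "b' = a2 + t2*c" using M'E[OF h2] by blast
    have m1: "m1 \<in> CC" and m2: "m2 \<in> CC" using Mc r1(1) r2(1) by auto
    have eq: "ad m1 (smr t1 y) = ad m2 (smr t2 y)" using r1(2) r2(2) by simp
    show "a' = b'"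
    proof (cases "t1 = t2")
      case True
      have "ad (smr t1 y) m1 = ad (smr t1 y) m2" using eq True add_comm[OF m1 smr_in[OF y]] add_comm[OF m2 smr_in[OF y]] by simp
      then have "m1 = m2" by (rule cancel[OF smr_in[OF y] m1 m2])
      then have "a1 = a2" using goodG_fun[OF M r1(1)] r2(1) by simp
      then show ?thesis using r1(3) r2(3) True by simp
    next
      case False
      define e where "e = ad m1 (smr (-1) m2)"
      have m2n: "smr (-1) m2 \<in> CC" by (rule smr_in[OF m2])
      have eM: "(e, a1 + (-1)*a2) \<in> M" unfolding e_def by (rule goodG_add[OF M r1(1) goodG_smr[OF M r2(1)]])
      define P where "P = ad (smr (-1) m2) (smr (-t1) y)"
      have "ad (ad m1 (smr t1 y)) P = ad (ad m1 (smr (-1) m2)) (ad (smr t1 y) (smr (-t1) y))"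
        unfolding P_def by (rule add4[OF m1 smr_in[OF y] m2n smr_in[OF y]])
      also have "\<dots> = e" unfolding e_def using smr_add[OF y, of t1 "-t1"] smr_0[OF y] zero_right[OF add_in[OF m1 m2n]] by simp
      finally have A: "ad (ad m1 (smr t1 y)) P = e" .
      have "ad (ad m2 (smr t2 y)) P = ad (ad m2 (smr (-1) m2)) (ad (smr t2 y) (smr (-t1) y))"
        unfolding P_def by (rule add4[OF m2 smr_in[OF y] m2n smr_in[OF y]])
      also have "\<dots> = smr (t2 - t1) y" using neg_r[OF m2] smr_add[OF y, of t2 "-t1"] zero_left[OF smr_in[OF y]] by simp
      finally have B: "ad (ad m2 (smr t2 y)) P = smr (t2 - t1) y" .
      have ee: "e = smr (t2 - t1) y" using A B eq by simp
      have "(smr (1/(t2 - t1)) e, (1/(t2-t1)) * (a1 + (-1)*a2)) \<in> M" by (rule goodG_smr[OF M eM])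
      moreover have "smr (1/(t2 - t1)) e = y" using ee smr_smr[OF y] smr_1[OF y] False by simp
      ultimately have "y \<in> fst ` M" by force
      then show ?thesis using ny by simp
    qed
  next
    fix u1 a1' u2 a2' assume h1: "(u1,a1') \<in> M'" and h2: "(u2,a2') \<in> M'"
    obtain m1 a1 t1 where r1: "(m1,a1) \<in> M" "u1 = ad m1 (smr t1 y)" "a1' = a1 + t1*c" using M'E[OF h1] by blast
    obtain m2 a2 t2 where r2: "(m2,a2) \<in> M" "u2 = ad m2 (smr t2 y)" "a2' = a2 + t2*c" using M'E[OF h2] by blast
    have m1: "m1 \<in> CC" and m2: "m2 \<in> CC" using Mc r1(1) r2(1) by auto
    have "(ad (ad m1 m2) (smr (t1+t2) y), (a1+a2) + (t1+t2)*c) \<in> M'" by (rule memM'[OF goodG_add[OF M r1(1) r2(1)]])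
    moreover have "ad u1 u2 = ad (ad m1 m2) (smr (t1+t2) y)"
      using r1(2) r2(2) add4[OF m1 smr_in[OF y] m2 smr_in[OF y]] smr_add[OF y] by simp
    moreover have "a1' + a2' = (a1+a2) + (t1+t2)*c" using r1(3) r2(3) by (simp add: algebra_simps)
    ultimately show "(ad u1 u2, a1' + a2') \<in> M'" by simp
  next
    fix r u a' assume h: "(u,a') \<in> M'"
    obtain m a t where rr: "(m,a) \<in> M" "u = ad m (smr t y)" "a' = a + t*c" using M'E[OF h] by blast
    have m: "m \<in> CC" using Mc rr(1) by auto
    have "(ad (smr r m) (smr (r*t) y), r*a + (r*t)*c) \<in> M'" by (rule memM'[OF goodG_smr[OF M rr(1)]])
    moreover have "smr r u = ad (smr r m) (smr (r*t) y)" using rr(2) smr_dv[OF m smr_in[OF y]] smr_smr[OF y] by simp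
    moreover have "r * a' = r*a + (r*t)*c" using rr(3) by (simp add: algebra_simps)
    ultimately show "(smr r u, r * a') \<in> M'" by simp
  next
    fix u a' assume h: "(u,a') \<in> M'"
    obtain m a t where rr: "(m,a) \<in> M" "u = ad m (smr t y)" "a' = a + t*c" using M'E[OF h] by blast
    have m: "m \<in> CC" using Mc rr(1) by auto
    have am: "a \<le> pn m" by (rule goodG_le[OF M rr(1)])
    show "a' \<le> pn u"
    proof (cases t "0::real" rule: linorder_cases)
      case equal
      then show ?thesis using rr am smr_0[OF y] zero_right[OF m] by simp
    next
      case greater
      define m' where "m' = smr (1/t) m"
      have m'M: "(m', (1/t)*a) \<in> M" unfolding m'_def by (rule goodG_smr[OF M rr(1)])
      have m'c: "m' \<in> CC" unfolding m'_def by (rule smr_in[OF m])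
      have cc: "c \<le> pn (ad m' y) - (1/t)*a" by (rule cL[OF m'M])
      have "t * pn (ad m' y) = pn (smr t (ad m' y))" using pn_homr[OF add_in[OF m'c y], of t] greater by simp
      also have "smr t (ad m' y) = ad m (smr t y)"
        using smr_dv[OF m'c y, of t] smr_smr[OF m] smr_1[OF m] greater unfolding m'_def by simp
      finally have tp: "t * pn (ad m' y) = pn u" using rr(2) by simp
      have "a' = a + t*c" by (rule rr(3))
      also have "\<dots> \<le> a + t * (pn (ad m' y) - (1/t)*a)" using cc greater by (simp add: mult_left_mono)
      also have "\<dots> = t * pn (ad m' y)" using greater by (simp add: algebra_simps)
      finally show ?thesis using tp by simp
    next
      case less
      define s where "s = - t"
      have s0: "0 < s" using less by (simp add: s_def)
      define m' where "m' = smr (1/s) m"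
      have m'M: "(m', (1/s)*a) \<in> M" unfolding m'_def by (rule goodG_smr[OF M rr(1)])
      have m'c: "m' \<in> CC" unfolding m'_def by (rule smr_in[OF m])
      have cc: "(1/s)*a - pn (ad m' (smr (-1) y)) \<le> c" by (rule cU[OF m'M])
      have "s * pn (ad m' (smr (-1) y)) = pn (smr s (ad m' (smr (-1) y)))" using pn_homr[OF add_in[OF m'c yn], of s] s0 by simp
      also have "smr s (ad m' (smr (-1) y)) = ad m (smr t y)"
        using smr_dv[OF m'c yn, of s] smr_smr[OF m] smr_smr[OF y] smr_1[OF m] s0 unfolding m'_def s_def by simp
      finally have tp: "s * pn (ad m' (smr (-1) y)) = pn u" using rr(2) by simp
      have "a' = a - s*c" using rr(3) by (simp add: s_def)
      also have "\<dots> \<le> a - s * ((1/s)*a - pn (ad m' (smr (-1) y)))" using cc s0 by (simp add: mult_left_mono)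
      also have "\<dots> = s * pn (ad m' (smr (-1) y))" using s0 by (simp add: algebra_simps)
      finally show ?thesis using tp by simp
    qed
  next
    show "(x0, pn x0) \<in> M'" using sub goodG_x0[OF M] by blast
  qed
  show ?thesis using good sub yin by blast
qed

end

context nsp
begin

lemma hb_real: assumes x0: "x0 \<in> CC" "x0 \<noteq> zz"
  shows "\<exists>g. (\<forall>y\<in>CC. \<forall>w\<in>CC. g (ad y w) = g y + g w) \<and> (\<forall>r. \<forall>y\<in>CC. g (smr r y) = r * g y)
           \<and> (\<forall>y\<in>CC. g y \<le> pn y) \<and> g x0 = pn x0"
proof -
  let ?A = "{G. goodG x0 G}"
  have "\<forall>C\<in>chains ?A. \<exists>U\<in>?A. \<forall>X\<in>C. X \<subseteq> U"
  proof
    fix C assume C: "C \<in> chains ?A"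
    show "\<exists>U\<in>?A. \<forall>X\<in>C. X \<subseteq> U"
    proof (cases "C = {}")
      case True then show ?thesis using G0_good[OF x0] by blast
    next
      case False then show ?thesis using chain_good[OF C False] by blast
    qed
  qed
  from Zorn_Lemma2[OF this] obtain M where MA: "M \<in> ?A" and max: "\<forall>X\<in>?A. M \<subseteq> X \<longrightarrow> X = M" by blast
  have M: "goodG x0 M" using MA by simp
  have dom: "y \<in> fst ` M" if y: "y \<in> CC" for y
  proof (rule ccontr)
    assume ny: "y \<notin> fst ` M"
    obtain M' where M': "goodG x0 M'" "M \<subseteq> M'" "y \<in> fst ` M'" using extend[OF M x0(1) y ny] by blast
    then have "M' = M" using max by simp
    then show False using M'(3) ny by simp
  qed
  define g where "g y = (THE a. (y,a) \<in> M)" for y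
  have gv: "g y = a" if h: "(y,a) \<in> M" for y a
    unfolding g_def
  proof (rule the_equality)
    show "(y,a) \<in> M" by (rule h)
  next
    fix b assume "(y,b) \<in> M"
    then show "b = a" using goodG_fun[OF M h] by simp
  qed
  have gM: "(y, g y) \<in> M" if hy: "y \<in> CC" for y
  proof -
    obtain a where "(y,a) \<in> M" using dom[OF hy] by force
    then show ?thesis using gv by simp
  qed
  show ?thesis
  proof (intro exI[of _ g] conjI ballI allI)
    fix y w assume hy: "y \<in> CC" and hw: "w \<in> CC"
    show "g (ad y w) = g y + g w" by (rule gv[OF goodG_add[OF M gM[OF hy] gM[OF hw]]])
  next
    fix r y assume hy: "y \<in> CC"
    show "g (smr r y) = r * g y" by (rule gv[OF goodG_smr[OF M gM[OF hy]]])
  next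
    fix y assume hy: "y \<in> CC"
    show "g y \<le> pn y" by (rule goodG_le[OF M gM[OF hy]])
  next
    show "g x0 = pn x0" using gv[OF goodG_x0[OF M]] .
  qed
qed

lemma hb_cplx: assumes x0: "x0 \<in> CC" "x0 \<noteq> zz"
  shows "\<exists>f\<in>dual_carrier V. f x0 \<noteq> 0"
proof -
  from hb_real[OF x0] obtain g where G: "(\<forall>y\<in>CC. \<forall>w\<in>CC. g (ad y w) = g y + g w) \<and> (\<forall>r. \<forall>y\<in>CC. g (smr r y) = r * g y)
           \<and> (\<forall>y\<in>CC. g y \<le> pn y) \<and> g x0 = pn x0" by (elim exE)
  have gadd: "\<And>y w. y \<in> CC \<Longrightarrow> w \<in> CC \<Longrightarrow> g (ad y w) = g y + g w" using G by blast
  have gsmr: "\<And>r y. y \<in> CC \<Longrightarrow> g (smr r y) = r * g y" using G by blast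
  have gle: "\<And>y. y \<in> CC \<Longrightarrow> g y \<le> pn y" using G by blast
  have gx: "g x0 = pn x0" using G by blast
  have gabs: "\<bar>g y\<bar> \<le> pn y" if y: "y \<in> CC" for y
  proof -
    have "- g y = g (smr (-1) y)" using gsmr[OF y, of "-1"] by simp
    also have "\<dots> \<le> pn (smr (-1) y)" by (rule gle[OF smr_in[OF y]])
    also have "\<dots> = pn y" using pn_homr[OF y, of "-1"] by simp
    finally show ?thesis using gle[OF y] by linarith
  qed
  have gsm: "g (sm c y) = Re c * g y + Im c * g (sm \<i> y)" if y: "y \<in> CC" for c y
  proof -
    have ceq: "complex_of_real (Re c) + complex_of_real (Im c) * \<i> = c" by (simp add: complex_eq_iff)
    have "sm c y = sm (complex_of_real (Re c) + complex_of_real (Im c) * \<i>) y"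
      by (simp only: ceq)
    also have "\<dots> = ad (sm (complex_of_real (Re c)) y) (sm (complex_of_real (Im c) * \<i>) y)" by (rule sm_ds[OF y])
    also have "sm (complex_of_real (Im c) * \<i>) y = smr (Im c) (sm \<i> y)" unfolding smr_def by (rule sm_assoc[OF y])
    finally have "sm c y = ad (smr (Re c) y) (smr (Im c) (sm \<i> y))" by (simp add: smr_def)
    then show ?thesis using gadd[OF smr_in[OF y] smr_in[OF sm_in[OF y]]] gsmr[OF y] gsmr[OF sm_in[OF y]] by simp
  qed
  define f where "f y = (if y \<in> CC then complex_of_real (g y) - \<i> * complex_of_real (g (sm \<i> y)) else 0)" for y
  have lin: "lin_fun V f"
    unfolding lin_fun_def
  proof (intro conjI ballI allI)
    fix y w assume y: "y \<in> CC" and w: "w \<in> CC"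
    have "g (sm \<i> (ad y w)) = g (sm \<i> y) + g (sm \<i> w)" using sm_dv[OF y w] gadd[OF sm_in[OF y] sm_in[OF w]] by simp
    then show "f (ad y w) = f y + f w" using y w add_in[OF y w] gadd[OF y w] by (simp add: f_def algebra_simps)
  next
    fix c y assume y: "y \<in> CC"
    have "g (sm \<i> (sm c y)) = g (sm (\<i> * c) y)" using sm_assoc[OF y, of \<i> c] by simp
    also have "\<dots> = - Im c * g y + Re c * g (sm \<i> y)" using gsm[OF y, of "\<i> * c"] by simp
    finally have e2: "g (sm \<i> (sm c y)) = - Im c * g y + Re c * g (sm \<i> y)" .
    show "f (sm c y) = c * f y" using y sm_in[OF y] gsm[OF y, of c] e2
      by (simp add: f_def complex_eq_iff algebra_simps)
  qed
  have bnd: "\<forall>y\<in>CC. cmod (f y) \<le> 2 * os_mnorm V 1 (\<lambda>_ _. y)"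
  proof
    fix y assume y: "y \<in> CC"
    have "cmod (f y) = cmod (complex_of_real (g y) - \<i> * complex_of_real (g (sm \<i> y)))" using y by (simp add: f_def)
    also have "\<dots> \<le> cmod (complex_of_real (g y)) + cmod (\<i> * complex_of_real (g (sm \<i> y)))"
      by (rule norm_triangle_ineq4)
    also have "\<dots> = \<bar>g y\<bar> + \<bar>g (sm \<i> y)\<bar>" by (simp add: norm_mult)
    also have "\<dots> \<le> pn y + pn (sm \<i> y)" using gabs[OF y] gabs[OF sm_in[OF y, of "\<i>"]] by (rule add_mono)
    also have "pn (sm \<i> y) = pn y" using pn_hom[OF y] by simp
    finally show "cmod (f y) \<le> 2 * os_mnorm V 1 (\<lambda>_ _. y)" by (simp add: pn_def)
  qed
  have fin: "f \<in> dual_carrier V" unfolding dual_carrier_def using lin bnd by (auto simp: f_def)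
  have "Re (f x0) = pn x0" using x0 gx by (simp add: f_def)
  moreover have "0 < pn x0" using pn_zero[OF x0(1)] pn_nonneg[OF x0(1)] x0(2) by linarith
  ultimately have "f x0 \<noteq> 0" by auto
  then show ?thesis using fin by blast
qed

end

lemma hb: assumes "operator_space E" "x \<in> os_carrier E" "x \<noteq> os_zero E"
  shows "\<exists>f\<in>dual_carrier E. f x \<noteq> 0"
proof -
  interpret nsp E by unfold_locales (rule assms(1))
  show ?thesis by (rule hb_cplx[OF assms(2,3)])
qed

definition nrm :: "(nat \<Rightarrow> complex) \<Rightarrow> nat \<Rightarrow> real" where
  "nrm v c = L2_set (\<lambda>j. cmod (v j)) {..<c}"

definition mv :: "(nat \<Rightarrow> nat \<Rightarrow> complex) \<Rightarrow> nat \<Rightarrow> (nat \<Rightarrow> complex) \<Rightarrow> nat \<Rightarrow> complex" where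
  "mv A c v = (\<lambda>i. \<Sum>j<c. A i j * v j)"

definition bil :: "nat \<Rightarrow> nat \<Rightarrow> (nat \<Rightarrow> nat \<Rightarrow> complex) \<Rightarrow> (nat \<Rightarrow> complex) \<Rightarrow> (nat \<Rightarrow> complex) \<Rightarrow> complex" where
  "bil r c A u v = (\<Sum>i<r. cnj (u i) * mv A c v i)"

lemma nrm_nonneg[simp]: "0 \<le> nrm v c" by (simp add: nrm_def)

lemma cmat_norm_alt: "cmat_norm r c A = Sup (insert 0 {nrm (mv A c v) r | v. nrm v c \<le> 1})"
proof -
  have "{sqrt (\<Sum>i<r. (cmod (\<Sum>j<c. A i j * v j))\<^sup>2) | v. (\<Sum>j<c. (cmod (v j))\<^sup>2) \<le> 1}
      = {nrm (mv A c v) r | v. nrm v c \<le> 1}"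
    by (simp add: nrm_def mv_def L2_set_def)
  then show ?thesis by (simp add: cmat_norm_def)
qed

lemma cmod_mv_le: assumes "nrm v c \<le> 1" shows "cmod (mv A c v i) \<le> (\<Sum>j<c. cmod (A i j))"
proof -
  have vj: "cmod (v j) \<le> 1" if "j < c" for j
  proof -
    have "cmod (v j) \<le> nrm v c" unfolding nrm_def by (rule member_le_L2_set) (use that in auto)
    then show ?thesis using assms by simp
  qed
  have "cmod (mv A c v i) \<le> (\<Sum>j<c. cmod (A i j * v j))" unfolding mv_def by (rule norm_sum)
  also have "\<dots> \<le> (\<Sum>j<c. cmod (A i j))"
    by (rule sum_mono) (auto simp: norm_mult intro: mult_left_le[OF vj])
  finally show ?thesis .
qed

lemma cm_set_bdd: "bdd_above (insert 0 {nrm (mv A c v) r | v. nrm v c \<le> 1})"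
proof -
  have "x \<le> (\<Sum>i<r. \<Sum>j<c. cmod (A i j))" if xin: "x \<in> {nrm (mv A c v) r | v. nrm v c \<le> 1}" for x
  proof -
    obtain v where x: "x = nrm (mv A c v) r" and v: "nrm v c \<le> 1" using xin by blast
    have "x \<le> (\<Sum>i<r. \<bar>cmod (mv A c v i)\<bar>)" unfolding x nrm_def by (rule L2_set_le_sum_abs)
    also have "\<dots> \<le> (\<Sum>i<r. \<Sum>j<c. cmod (A i j))" by (rule sum_mono) (use cmod_mv_le[OF v] in auto)
    finally show ?thesis .
  qed
  moreover have "0 \<le> (\<Sum>i<r. \<Sum>j<c. cmod (A i j))" by (auto intro!: sum_nonneg)
  ultimately show ?thesis unfolding bdd_above_def by blast
qed

lemma cm_nonneg[simp]: "0 \<le> cmat_norm r c A"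
  unfolding cmat_norm_alt by (rule cSup_upper[OF _ cm_set_bdd]) auto

lemma cm_upper1: "nrm v c \<le> 1 \<Longrightarrow> nrm (mv A c v) r \<le> cmat_norm r c A"
  unfolding cmat_norm_alt by (rule cSup_upper[OF _ cm_set_bdd]) auto

lemma cm_least: "0 \<le> M \<Longrightarrow> (\<And>v. nrm v c \<le> 1 \<Longrightarrow> nrm (mv A c v) r \<le> M) \<Longrightarrow> cmat_norm r c A \<le> M"
  unfolding cmat_norm_alt by (rule cSup_least) auto

lemma nrm_scale: "nrm (\<lambda>j. a * v j) c = cmod a * nrm v c"
  by (simp add: nrm_def norm_mult L2_set_right_distrib)

lemma mv_scale: "mv A c (\<lambda>j. a * v j) = (\<lambda>i. a * mv A c v i)"
  by (simp add: mv_def sum_distrib_left algebra_simps)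

lemma nrm_zero_imp: "nrm v c = 0 \<Longrightarrow> j < c \<Longrightarrow> v j = 0"
  unfolding nrm_def by (subst (asm) L2_set_eq_0_iff) auto

lemma mv_zero: "(\<And>j. j < c \<Longrightarrow> v j = 0) \<Longrightarrow> mv A c v i = 0"
  by (simp add: mv_def)

lemma nrm_cong: "(\<And>j. j < c \<Longrightarrow> v j = w j) \<Longrightarrow> nrm v c = nrm w c"
  unfolding nrm_def by (rule L2_set_cong) auto

lemma cm_upper: "nrm (mv A c v) r \<le> cmat_norm r c A * nrm v c"
proof (cases "nrm v c = 0")
  case True
  then have "nrm (mv A c v) r = nrm (\<lambda>_. 0) r"
    by (intro nrm_cong mv_zero) (auto intro: nrm_zero_imp)
  then show ?thesis using True by (simp add: nrm_def L2_set_0')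
next
  case False
  then have pos: "nrm v c > 0" using nrm_nonneg[of v c] by linarith
  define a where "a = complex_of_real (1 / nrm v c)"
  have ca: "cmod a = 1 / nrm v c" using pos unfolding a_def norm_of_real by simp
  have "nrm (\<lambda>j. a * v j) c \<le> 1" using pos by (simp add: nrm_scale ca)
  then have "nrm (mv A c (\<lambda>j. a * v j)) r \<le> cmat_norm r c A" by (rule cm_upper1)
  then have "nrm (mv A c v) r / nrm v c \<le> cmat_norm r c A"
    by (simp add: mv_scale nrm_scale ca)
  then show ?thesis using pos by (simp add: divide_le_eq mult.commute)
qed

lemma cs_ineq: "cmod (\<Sum>i<r. cnj (u i) * w i) \<le> nrm u r * nrm w r"
proof -
  have "cmod (\<Sum>i<r. cnj (u i) * w i) \<le> (\<Sum>i<r. cmod (cnj (u i) * w i))" by (rule norm_sum)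
  also have "\<dots> = (\<Sum>i<r. \<bar>cmod (u i)\<bar> * \<bar>cmod (w i)\<bar>)" by (simp add: norm_mult)
  also have "\<dots> \<le> nrm u r * nrm w r" unfolding nrm_def by (rule L2_set_mult_ineq)
  finally show ?thesis .
qed

lemma cm_bil: "cmod (bil r c A u v) \<le> cmat_norm r c A * nrm u r * nrm v c"
proof -
  have "cmod (bil r c A u v) \<le> nrm u r * nrm (mv A c v) r" unfolding bil_def by (rule cs_ineq)
  also have "\<dots> \<le> nrm u r * (cmat_norm r c A * nrm v c)" by (rule mult_left_mono[OF cm_upper]) simp
  finally show ?thesis by (simp add: algebra_simps)
qed

lemma nrm_sq: "(nrm w r)\<^sup>2 = (\<Sum>i<r. cnj (w i) * w i)"
proof -
  have "(nrm w r)\<^sup>2 = (\<Sum>i<r. (cmod (w i))\<^sup>2)" unfolding nrm_def L2_set_def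
    by (simp add: sum_nonneg)
  also have "complex_of_real \<dots> = (\<Sum>i<r. complex_of_real ((cmod (w i))\<^sup>2))"
    by (simp only: of_real_sum)
  also have "\<dots> = (\<Sum>i<r. cnj (w i) * w i)"
    by (rule sum.cong) (auto simp: complex_norm_square mult.commute simp del: of_real_power)
  finally show ?thesis .
qed

lemma cm_le: assumes M: "0 \<le> M" and H: "\<And>u v. cmod (bil r c A u v) \<le> M * nrm u r * nrm v c"
  shows "cmat_norm r c A \<le> M"
proof (rule cm_least[OF M])
  fix v assume v: "nrm v c \<le> 1"
  let ?w = "mv A c v"
  have "(nrm ?w r)\<^sup>2 = cmod (bil r c A ?w v)"
    using nrm_sq[of ?w r] unfolding bil_def
    by (metis norm_of_real abs_of_nonneg zero_le_power2 nrm_nonneg)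
  also have "\<dots> \<le> M * nrm ?w r * nrm v c" by (rule H)
  also have "\<dots> \<le> M * nrm ?w r" using v M by (simp add: mult_left_le)
  finally have "nrm ?w r * nrm ?w r \<le> M * nrm ?w r" by (simp add: power2_eq_square)
  then show "nrm ?w r \<le> M"
  proof (cases "nrm ?w r = 0")
    case True then show ?thesis using M by simp
  next
    case False then have "0 < nrm ?w r" using nrm_nonneg[of ?w r] by linarith
    then show ?thesis using mult_right_le_imp_le[of "nrm ?w r" "nrm ?w r" M] \<open>nrm ?w r * nrm ?w r \<le> M * nrm ?w r\<close> by blast
  qed
qed

lemma cm_cong: "(\<And>i j. i < r \<Longrightarrow> j < c \<Longrightarrow> A i j = B i j) \<Longrightarrow> cmat_norm r c A = cmat_norm r c B"
proof -
  assume H: "\<And>i j. i < r \<Longrightarrow> j < c \<Longrightarrow> A i j = B i j"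
  have "mv A c v i = mv B c v i" if "i < r" for v i using H that by (simp add: mv_def)
  then have "nrm (mv A c v) r = nrm (mv B c v) r" for v by (intro nrm_cong) auto
  then show ?thesis unfolding cmat_norm_alt by simp
qed

lemma bil_scale: "bil r c (\<lambda>i j. a * A i j) u v = a * bil r c A u v"
  by (simp add: bil_def mv_def sum_distrib_left algebra_simps)

lemma cm_zero: "cmat_norm r c (\<lambda>_ _. 0) = 0"
  using cm_le[of 0 r c "\<lambda>_ _. 0"] cm_nonneg[of r c "\<lambda>_ _. 0"] by (simp add: bil_def mv_def)

lemma cm_scale: "cmat_norm r c (\<lambda>i j. a * A i j) = cmod a * cmat_norm r c A"
proof (cases "a = 0")
  case True then show ?thesis using cm_zero by simp
next
  case False
  have le1: "cmat_norm r c (\<lambda>i j. b * B i j) \<le> cmod b * cmat_norm r c B" for b B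
    by (rule cm_le) (auto simp: bil_scale norm_mult mult.assoc intro: mult_left_mono[OF order.trans[OF cm_bil], simplified mult.assoc])
  have ia: "\<And>x. inverse a * (a * x) = x" using False by (simp add: mult.assoc[symmetric])
  have "cmat_norm r c A = cmat_norm r c (\<lambda>i j. inverse a * (a * A i j))" by (simp only: ia)
  also have "\<dots> \<le> cmod (inverse a) * cmat_norm r c (\<lambda>i j. a * A i j)" by (rule le1)
  finally have "cmat_norm r c A \<le> cmod (inverse a) * cmat_norm r c (\<lambda>i j. a * A i j)" .
  then have "cmod a * cmat_norm r c A \<le> cmod a * (cmod (inverse a) * cmat_norm r c (\<lambda>i j. a * A i j))"
    by (rule mult_left_mono) simp
  then have "cmod a * cmat_norm r c A \<le> cmat_norm r c (\<lambda>i j. a * A i j)"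
    using False by (simp add: norm_inverse mult.assoc[symmetric])
  with le1[of a A] show ?thesis by linarith
qed

lemma div_lt: "p < n*m \<Longrightarrow> p div m < (n::nat)"
  by (cases "m = 0") (auto simp: div_less_iff_less_mult)

lemma sum_split_divmod: fixes n m :: nat shows "(\<Sum>p<n*m. g p) = (\<Sum>i<n. \<Sum>k<m. g (i*m+k))"
proof -
  have bij: "bij_betw (\<lambda>(i,k). i*m+k) ({..<n} \<times> {..<m}) {..<n*m}"
  proof (rule bij_betw_imageI)
    show "inj_on (\<lambda>(i,k). i*m+k) ({..<n} \<times> {..<m})"
    proof (rule inj_onI, clarsimp)
      fix i k i' k' :: nat assume "k < m" "k' < m" "i*m+k = i'*m+k'"
      then show "i = i' \<and> k = k'"
      proof -
        have "(i*m+k) div m = (i'*m+k') div m" "(i*m+k) mod m = (i'*m+k') mod m" using \<open>i*m+k = i'*m+k'\<close> by simp_all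
        then show ?thesis using \<open>k < m\<close> \<open>k' < m\<close> by simp
      qed
    qed
    show "(\<lambda>(i,k). i*m+k) ` ({..<n} \<times> {..<m}) = {..<n*m}"
    proof
      show "(\<lambda>(i,k). i*m+k) ` ({..<n} \<times> {..<m}) \<subseteq> {..<n*m}"
      proof clarsimp
        fix i k assume "i < n" "k < m"
        then have "i*m + k < i*m + m" by simp
        also have "\<dots> = (i+1)*m" by simp
        also have "\<dots> \<le> n*m" using \<open>i<n\<close> by (intro mult_right_mono) auto
        finally show "i*m+k < n*m" .
      qed
      show "{..<n*m} \<subseteq> (\<lambda>(i,k). i*m+k) ` ({..<n} \<times> {..<m})"
      proof
        fix p assume "p \<in> {..<n*m}"
        then have p: "p < n*m" by simp
        then have m: "0 < m" by (cases m) auto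
        have "p div m < n" using p by (simp add: div_lt)
        moreover have "p mod m < m" using m by simp
        moreover have "p = (p div m)*m + p mod m" by simp
        ultimately show "p \<in> (\<lambda>(i,k). i*m+k) ` ({..<n} \<times> {..<m})"
          by (intro image_eqI[of _ _ "(p div m, p mod m)"]) auto
      qed
    qed
  qed
  have "(\<Sum>p<n*m. g p) = (\<Sum>x\<in>{..<n} \<times> {..<m}. g ((\<lambda>(i,k). i*m+k) x))"
    by (rule sum.reindex_bij_betw[OF bij, symmetric])
  also have "\<dots> = (\<Sum>i<n. \<Sum>k<m. g (i*m+k))"
    by (simp add: sum.cartesian_product split_def)
  finally show ?thesis .
qed

lemma divmod_simps: "(k::nat) < m \<Longrightarrow> (i*m+k) div m = i" "(k::nat) < m \<Longrightarrow> (i*m+k) mod m = k"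
  by auto

lemma sum_split_divmod2: fixes n m :: nat shows "(\<Sum>p<n*m. h (p div m) (p mod m)) = (\<Sum>i<n. \<Sum>k<m. h i k)"
  unfolding sum_split_divmod by (intro sum.cong refl) simp

lemma cm_perm_le:
  assumes bij: "bij_betw \<sigma> {..<r} {..<r}"
  shows "cmat_norm r r (\<lambda>p q. A (\<sigma> p) (\<sigma> q)) \<le> cmat_norm r r A"
proof (rule cm_le[OF cm_nonneg])
  fix u v
  define \<tau> where "\<tau> = the_inv_into {..<r} \<sigma>"
  have tau: "\<tau> (\<sigma> q) = q" if "q < r" for q
    unfolding \<tau>_def using bij that by (simp add: bij_betw_def the_inv_into_f_f)
  have re: "(\<Sum>q<r. g (\<sigma> q)) = (\<Sum>q<r. g q)" for g :: "nat \<Rightarrow> 'b::comm_monoid_add"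
    using sum.reindex_bij_betw[OF bij, of g] by simp
  have "bil r r (\<lambda>p q. A (\<sigma> p) (\<sigma> q)) u v = (\<Sum>p<r. cnj (u p) * (\<Sum>q<r. A (\<sigma> p) (\<sigma> q) * v q))"
    by (simp add: bil_def mv_def)
  also have "\<dots> = (\<Sum>p<r. cnj (u (\<tau> (\<sigma> p))) * (\<Sum>q<r. A (\<sigma> p) (\<sigma> q) * v (\<tau> (\<sigma> q))))"
    by (intro sum.cong refl arg_cong2[where f="(*)"]) (auto simp: tau)
  also have "\<dots> = (\<Sum>p<r. cnj (u (\<tau> (\<sigma> p))) * (\<Sum>q<r. A (\<sigma> p) q * v (\<tau> q)))"
    by (subst re[of "\<lambda>q. A _ q * v (\<tau> q)"]) simp
  also have "\<dots> = bil r r A (\<lambda>p. u (\<tau> p)) (\<lambda>q. v (\<tau> q))"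
    using re[of "\<lambda>p. cnj (u (\<tau> p)) * (\<Sum>q<r. A p q * v (\<tau> q))"] by (simp add: bil_def mv_def)
  finally have eq: "bil r r (\<lambda>p q. A (\<sigma> p) (\<sigma> q)) u v = bil r r A (\<lambda>p. u (\<tau> p)) (\<lambda>q. v (\<tau> q))" .
  have nr: "nrm (\<lambda>p. w (\<tau> p)) r = nrm w r" for w
  proof -
    have "nrm (\<lambda>p. w (\<tau> p)) r = sqrt (\<Sum>p<r. (cmod (w (\<tau> p)))\<^sup>2)" by (simp add: nrm_def L2_set_def)
    also have "(\<Sum>p<r. (cmod (w (\<tau> p)))\<^sup>2) = (\<Sum>p<r. (cmod (w (\<tau> (\<sigma> p))))\<^sup>2)"
      using re[of "\<lambda>p. (cmod (w (\<tau> p)))\<^sup>2"] by simp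
    also have "\<dots> = (\<Sum>p<r. (cmod (w p))\<^sup>2)" by (rule sum.cong) (auto simp: tau)
    finally show ?thesis by (simp add: nrm_def L2_set_def)
  qed
  show "cmod (bil r r (\<lambda>p q. A (\<sigma> p) (\<sigma> q)) u v) \<le> cmat_norm r r A * nrm u r * nrm v r"
    using cm_bil[of r r A "\<lambda>p. u (\<tau> p)" "\<lambda>q. v (\<tau> q)"] by (simp add: eq nr)
qed

lemma cm_perm:
  assumes bij: "bij_betw \<sigma> {..<r} {..<r}"
  shows "cmat_norm r r (\<lambda>p q. A (\<sigma> p) (\<sigma> q)) = cmat_norm r r A"
proof -
  define \<tau> where "\<tau> = the_inv_into {..<r} \<sigma>"
  have bt: "bij_betw \<tau> {..<r} {..<r}" unfolding \<tau>_def by (rule bij_betw_the_inv_into[OF bij])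
  have st: "\<sigma> (\<tau> q) = q" if "q < r" for q
    unfolding \<tau>_def using bij that by (simp add: f_the_inv_into_f_bij_betw)
  have "cmat_norm r r A = cmat_norm r r (\<lambda>p q. (\<lambda>p q. A (\<sigma> p) (\<sigma> q)) (\<tau> p) (\<tau> q))"
    by (rule cm_cong) (simp add: st)
  also have "\<dots> \<le> cmat_norm r r (\<lambda>p q. A (\<sigma> p) (\<sigma> q))" by (rule cm_perm_le[OF bt])
  finally show ?thesis using cm_perm_le[OF bij, of A] by linarith
qed

lemma cm_swap:
  "cmat_norm (n*m) (n*m) (\<lambda>p q. G (p div m) (q div m) (p mod m) (q mod m))
 = cmat_norm (m*n) (m*n) (\<lambda>p q. G (p mod n) (q mod n) (p div n) (q div n))"
proof -
  define \<sigma> where "\<sigma> p = (p mod m) * n + p div m" for p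
  have inj: "inj_on \<sigma> {..<n*m}"
  proof (rule inj_onI)
    fix p q assume p: "p \<in> {..<n*m}" and q: "q \<in> {..<n*m}" and e: "\<sigma> p = \<sigma> q"
    have pd: "p div m < n" using p by (simp add: div_lt)
    have qd: "q div m < n" using q by (simp add: div_lt)
    have m: "0 < m" using p by (cases m) auto
    have "(\<sigma> p) div n = (\<sigma> q) div n" "(\<sigma> p) mod n = (\<sigma> q) mod n" using e by simp_all
    then have "p div m = q div m" "p mod m = q mod m" unfolding \<sigma>_def using pd qd m by simp_all
    then show "p = q" by (metis div_mult_mod_eq)
  qed
  have img: "\<sigma> ` {..<n*m} \<subseteq> {..<n*m}"
  proof clarsimp
    fix p assume p: "p < n*m"
    then have m: "0 < m" by (cases m) auto
    have pd: "p div m < n" using p by (simp add: div_lt)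
    have "p mod m < m" using m by simp
    then have "(p mod m)*n + p div m < (p mod m)*n + n" using pd by simp
    also have "\<dots> = (p mod m + 1) * n" by simp
    also have "\<dots> \<le> m * n" using \<open>p mod m < m\<close> by (intro mult_right_mono) auto
    finally show "\<sigma> p < n*m" by (simp add: \<sigma>_def mult.commute)
  qed
  have bij: "bij_betw \<sigma> {..<n*m} {..<n*m}"
    unfolding bij_betw_def using inj endo_inj_surj[OF _ img inj] by simp
  have key: "(\<sigma> p) div n = p mod m \<and> (\<sigma> p) mod n = p div m" if "p < n*m" for p
  proof -
    have "p div m < n" using that by (simp add: div_lt)
    then show ?thesis unfolding \<sigma>_def by simp
  qed
  have bij': "bij_betw \<sigma> {..<m*n} {..<m*n}" using bij by (simp add: mult.commute)
  have "cmat_norm (m*n) (m*n) (\<lambda>p q. G (p mod n) (q mod n) (p div n) (q div n))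
      = cmat_norm (m*n) (m*n) (\<lambda>p q. (\<lambda>p q. G (p mod n) (q mod n) (p div n) (q div n)) (\<sigma> p) (\<sigma> q))"
    by (rule cm_perm[OF bij', symmetric])
  also have "\<dots> = cmat_norm (n*m) (n*m) (\<lambda>p q. G (p div m) (q div m) (p mod m) (q mod m))"
    by (simp only: mult.commute[of m n], rule cm_cong) (simp add: key)
  finally show ?thesis by simp
qed

lemma cm_row: "cmat_norm 1 m (\<lambda>_ k. cnj (u k)) \<le> nrm u m"
proof (rule cm_le[OF nrm_nonneg])
  fix a v
  have e: "bil 1 m (\<lambda>_ k. cnj (u k)) a v = cnj (a 0) * (\<Sum>k<m. cnj (u k) * v k)" by (simp add: bil_def mv_def)
  have n: "nrm a 1 = cmod (a 0)" by (simp add: nrm_def L2_set_def lessThan_Suc)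
  have "cmod (a 0) * cmod (\<Sum>k<m. cnj (u k) * v k) \<le> cmod (a 0) * (nrm u m * nrm v m)"
    by (rule mult_left_mono[OF cs_ineq]) simp
  then show "cmod (bil 1 m (\<lambda>_ k. cnj (u k)) a v) \<le> nrm u m * nrm a 1 * nrm v m"
    by (simp only: e n norm_mult) (simp add: algebra_simps)
qed

lemma cm_col: "cmat_norm m 1 (\<lambda>k _. v k) \<le> nrm v m"
proof (rule cm_le[OF nrm_nonneg])
  fix a b
  have e: "bil m 1 (\<lambda>k _. v k) a b = (\<Sum>k<m. cnj (a k) * v k) * b 0" by (simp add: bil_def mv_def sum_distrib_right mult.assoc)
  have n: "nrm b 1 = cmod (b 0)" by (simp add: nrm_def L2_set_def lessThan_Suc)
  have "cmod (\<Sum>k<m. cnj (a k) * v k) * cmod (b 0) \<le> (nrm a m * nrm v m) * cmod (b 0)"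
    by (rule mult_right_mono[OF cs_ineq]) simp
  then show "cmod (bil m 1 (\<lambda>k _. v k) a b) \<le> nrm v m * nrm a m * nrm b 1"
    by (simp only: e n norm_mult) (simp add: algebra_simps)
qed

definition wk :: "'a opsp \<Rightarrow> bool" where
"wk V \<longleftrightarrow> os_zero V \<in> os_carrier V \<and>
  (\<forall>x\<in>os_carrier V. \<forall>y\<in>os_carrier V. os_add V x y \<in> os_carrier V) \<and>
  (\<forall>c. \<forall>x\<in>os_carrier V. os_smul V c x \<in> os_carrier V) \<and>
  (\<forall>x\<in>os_carrier V. os_add V (os_zero V) x = x) \<and>
  (\<forall>n X Y. (\<forall>i<n. \<forall>j<n. X i j = Y i j) \<longrightarrow> os_mnorm V n X = os_mnorm V n Y) \<and>
  (\<forall>n X. mat_in V n X \<longrightarrow> 0 \<le> os_mnorm V n X) \<and>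
  (\<forall>n m \<alpha> X \<beta>. mat_in V m X \<longrightarrow>
        os_mnorm V n (mtriple V m \<alpha> X \<beta>) \<le> cmat_norm n m \<alpha> * os_mnorm V m X * cmat_norm m n \<beta>)"

lemma os_wk: "operator_space V \<Longrightarrow> wk V"
  unfolding operator_space_def vector_space_on_def wk_def Let_def
  apply (elim conjE)
  apply (intro conjI)
  apply assumption+
  done

lemma wk_zero: "wk V \<Longrightarrow> os_zero V \<in> os_carrier V" unfolding wk_def by blast
lemma wk_add: "wk V \<Longrightarrow> x \<in> os_carrier V \<Longrightarrow> y \<in> os_carrier V \<Longrightarrow> os_add V x y \<in> os_carrier V" unfolding wk_def by blast
lemma wk_smul: "wk V \<Longrightarrow> x \<in> os_carrier V \<Longrightarrow> os_smul V c x \<in> os_carrier V" unfolding wk_def by blast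
lemma wk_zl: "wk V \<Longrightarrow> x \<in> os_carrier V \<Longrightarrow> os_add V (os_zero V) x = x" unfolding wk_def by blast
lemma wk_cong: "wk V \<Longrightarrow> (\<And>i j. i<n \<Longrightarrow> j<n \<Longrightarrow> X i j = Y i j) \<Longrightarrow> os_mnorm V n X = os_mnorm V n Y"
  unfolding wk_def by blast
lemma wk_nonneg: "wk V \<Longrightarrow> mat_in V n X \<Longrightarrow> 0 \<le> os_mnorm V n X" unfolding wk_def by blast
lemma wk_M2: "wk V \<Longrightarrow> mat_in V m X \<Longrightarrow>
   os_mnorm V n (mtriple V m \<alpha> X \<beta>) \<le> cmat_norm n m \<alpha> * os_mnorm V m X * cmat_norm m n \<beta>"
  unfolding wk_def by blast

lemma vsumN_in: "wk V \<Longrightarrow> (\<And>k. k<n \<Longrightarrow> g k \<in> os_carrier V) \<Longrightarrow> vsumN V g n \<in> os_carrier V"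
  by (induction n) (auto intro: wk_zero wk_add)

lemma lin_zero: assumes "wk V" "lin_fun V f" shows "f (os_zero V) = 0"
proof -
  have z: "os_zero V \<in> os_carrier V" using assms wk_zero by blast
  have "f (os_zero V) = f (os_add V (os_zero V) (os_zero V))" using wk_zl[OF assms(1) z] by simp
  also have "\<dots> = f (os_zero V) + f (os_zero V)" using assms(2) z unfolding lin_fun_def by blast
  finally show ?thesis by simp
qed

lemma lin_vsum: assumes "wk V" "lin_fun V f" shows "(\<And>k. k<n \<Longrightarrow> g k \<in> os_carrier V) \<Longrightarrow> f (vsumN V g n) = (\<Sum>k<n. f (g k))"
proof (induction n)
  case 0 then show ?case using lin_zero[OF assms] by simp
next
  case (Suc n)
  have "vsumN V g n \<in> os_carrier V" using Suc.prems by (intro vsumN_in[OF assms(1)]) auto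
  moreover have "g n \<in> os_carrier V" using Suc.prems by auto
  ultimately have "f (vsumN V g (Suc n)) = f (vsumN V g n) + f (g n)"
    using assms(2) unfolding lin_fun_def by simp
  then show ?case using Suc by simp
qed

lemma lin_smul: "lin_fun V f \<Longrightarrow> x \<in> os_carrier V \<Longrightarrow> f (os_smul V c x) = c * f x"
  unfolding lin_fun_def by blast

lemma mtriple_in: "wk V \<Longrightarrow> mat_in V m X \<Longrightarrow> mtriple V m \<alpha> X \<beta> i j \<in> os_carrier V"
  unfolding mtriple_def mat_in_def by (auto intro!: vsumN_in wk_smul)

lemma lin_mtriple: assumes "wk V" "lin_fun V f" "mat_in V m X"
  shows "f (mtriple V m \<alpha> X \<beta> i j) = (\<Sum>k<m. \<Sum>l<m. \<alpha> i k * \<beta> l j * f (X k l))"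
proof -
  have X: "X k l \<in> os_carrier V" if "k<m" "l<m" for k l using assms(3) that unfolding mat_in_def by blast
  have inner: "f (vsumN V (\<lambda>l. os_smul V (\<alpha> i k * \<beta> l j) (X k l)) m) = (\<Sum>l<m. \<alpha> i k * \<beta> l j * f (X k l))"
    if k: "k < m" for k
    by (subst lin_vsum[OF assms(1,2)]) (auto intro!: wk_smul[OF assms(1)] X k simp: lin_smul[OF assms(2)] X k)
  show ?thesis unfolding mtriple_def
    by (subst lin_vsum[OF assms(1,2)]) (auto intro!: vsumN_in[OF assms(1)] wk_smul[OF assms(1)] X sum.cong simp: inner)
qed

lemma vsumN_dual: "vsumN (dual V) g n = (\<lambda>x. \<Sum>k<n. g k x)"
  by (induction n) (auto simp: dual_def)

lemma mtriple_dual: "mtriple (dual V) m \<alpha> F \<beta> i j = (\<lambda>x. \<Sum>k<m. \<Sum>l<m. \<alpha> i k * \<beta> l j * F k l x)"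
  by (simp add: mtriple_def vsumN_dual) (simp add: dual_def)

lemma dual_bound: assumes "wk V" "f \<in> dual_carrier V"
  shows "\<exists>K\<ge>0. \<forall>x\<in>os_carrier V. cmod (f x) \<le> K * os_mnorm V 1 (\<lambda>_ _. x)"
proof -
  obtain K where K: "\<forall>x\<in>os_carrier V. cmod (f x) \<le> K * os_mnorm V 1 (\<lambda>_ _. x)"
    using assms(2) unfolding dual_carrier_def by blast
  have "cmod (f x) \<le> max K 0 * os_mnorm V 1 (\<lambda>_ _. x)" if x: "x \<in> os_carrier V" for x
  proof -
    have "0 \<le> os_mnorm V 1 (\<lambda>_ _. x)" using wk_nonneg[OF assms(1)] x by (simp add: mat_in_def)
    then have "K * os_mnorm V 1 (\<lambda>_ _. x) \<le> max K 0 * os_mnorm V 1 (\<lambda>_ _. x)" by (intro mult_right_mono) auto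
    then show ?thesis using K x by force
  qed
  then show ?thesis by (intro exI[of _ "max K 0"]) auto
qed

lemma dual_lin: "f \<in> dual_carrier V \<Longrightarrow> lin_fun V f" unfolding dual_carrier_def by blast
lemma dual_vanish: "f \<in> dual_carrier V \<Longrightarrow> x \<notin> os_carrier V \<Longrightarrow> f x = 0" unfolding dual_carrier_def by blast

lemma nrm_block: fixes n m :: nat assumes "i < n" shows "nrm (\<lambda>k. u (i*m+k)) m \<le> nrm u (n*m)"
proof -
  have "(\<Sum>k<m. (cmod (u (i*m+k)))\<^sup>2) \<le> (\<Sum>i'<n. \<Sum>k<m. (cmod (u (i'*m+k)))\<^sup>2)"
    by (rule member_le_sum[where f="\<lambda>i'. \<Sum>k<m. (cmod (u (i'*m+k)))\<^sup>2"]) (use assms in \<open>auto intro: sum_nonneg\<close>)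
  also have "\<dots> = (\<Sum>p<n*m. (cmod (u p))\<^sup>2)" by (rule sum_split_divmod[symmetric])
  finally show ?thesis unfolding nrm_def L2_set_def by simp
qed

abbreviation kron :: "nat \<Rightarrow> (nat \<Rightarrow> nat \<Rightarrow> 'a \<Rightarrow> complex) \<Rightarrow> (nat \<Rightarrow> nat \<Rightarrow> 'a) \<Rightarrow> nat \<Rightarrow> nat \<Rightarrow> complex" where
  "kron m F X \<equiv> (\<lambda>p q. F (p div m) (q div m) (X (p mod m) (q mod m)))"

lemma mat_in_dual: "mat_in (dual V) n F \<Longrightarrow> i < n \<Longrightarrow> j < n \<Longrightarrow> F i j \<in> dual_carrier V"
  by (simp add: mat_in_def dual_def)

lemma kron_bil:
  fixes n m :: nat
  assumes V: "wk V" and F: "mat_in (dual V) n F" and X: "mat_in V m X"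
  shows "bil (n*m) (n*m) (kron m F X) u v =
     (\<Sum>i<n. \<Sum>j<n. F i j (mtriple V m (\<lambda>_ k. cnj (u (i*m+k))) X (\<lambda>l _. v (j*m+l)) 0 0))"
proof -
  have inner: "(\<Sum>q<n*m. kron m F X p q * v q) = (\<Sum>j<n. \<Sum>l<m. F (p div m) j (X (p mod m) l) * v (j*m+l))" for p
    unfolding sum_split_divmod by (intro sum.cong refl) simp
  have "bil (n*m) (n*m) (kron m F X) u v = (\<Sum>p<n*m. cnj (u p) * (\<Sum>j<n. \<Sum>l<m. F (p div m) j (X (p mod m) l) * v (j*m+l)))"
    unfolding bil_def mv_def inner ..
  also have "\<dots> = (\<Sum>i<n. \<Sum>k<m. cnj (u (i*m+k)) * (\<Sum>j<n. \<Sum>l<m. F i j (X k l) * v (j*m+l)))"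
    unfolding sum_split_divmod by (intro sum.cong refl) simp
  also have "\<dots> = (\<Sum>i<n. \<Sum>k<m. \<Sum>j<n. \<Sum>l<m. cnj (u (i*m+k)) * v (j*m+l) * F i j (X k l))"
    by (simp add: sum_distrib_left algebra_simps)
  also have "\<dots> = (\<Sum>i<n. \<Sum>j<n. \<Sum>k<m. \<Sum>l<m. cnj (u (i*m+k)) * v (j*m+l) * F i j (X k l))"
    by (rule sum.cong[OF refl], rule sum.swap)
  also have "\<dots> = (\<Sum>i<n. \<Sum>j<n. F i j (mtriple V m (\<lambda>_ k. cnj (u (i*m+k))) X (\<lambda>l _. v (j*m+l)) 0 0))"
    by (intro sum.cong refl, subst lin_mtriple[OF V dual_lin[OF mat_in_dual[OF F]] X]) auto
  finally show ?thesis .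
qed

lemma single_bound:
  fixes m :: nat
  assumes V: "wk V" and f: "f \<in> dual_carrier V" and X: "mat_in V m X"
    and K: "\<forall>x\<in>os_carrier V. cmod (f x) \<le> K * os_mnorm V 1 (\<lambda>_ _. x)" and K0: "0 \<le> K"
  shows "cmod (f (mtriple V m (\<lambda>_ k. cnj (a k)) X (\<lambda>l _. b l) 0 0)) \<le> K * (nrm a m * os_mnorm V m X * nrm b m)"
proof -
  let ?y = "mtriple V m (\<lambda>_ k. cnj (a k)) X (\<lambda>l _. b l) 0 0"
  have y: "?y \<in> os_carrier V" by (rule mtriple_in[OF V X])
  have "os_mnorm V 1 (\<lambda>_ _. ?y) = os_mnorm V 1 (mtriple V m (\<lambda>_ k. cnj (a k)) X (\<lambda>l _. b l))"
    by (rule wk_cong[OF V]) simp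
  also have "\<dots> \<le> cmat_norm 1 m (\<lambda>_ k. cnj (a k)) * os_mnorm V m X * cmat_norm m 1 (\<lambda>l _. b l)"
    by (rule wk_M2[OF V X])
  also have "\<dots> \<le> nrm a m * os_mnorm V m X * nrm b m"
    using wk_nonneg[OF V X] cm_row[of m a] cm_col[of m b]
    by (intro mult_mono) (auto intro: mult_nonneg_nonneg)
  finally have "os_mnorm V 1 (\<lambda>_ _. ?y) \<le> nrm a m * os_mnorm V m X * nrm b m" .
  then have "K * os_mnorm V 1 (\<lambda>_ _. ?y) \<le> K * (nrm a m * os_mnorm V m X * nrm b m)"
    using K0 by (rule mult_left_mono)
  then show ?thesis using K y by force
qed

lemma kron_bound:
  fixes n :: nat
  assumes V: "wk V" and F: "mat_in (dual V) n F"
  shows "\<exists>K\<ge>0. \<forall>m X. mat_in V m X \<longrightarrow> cmat_norm (n*m) (n*m) (kron m F X) \<le> K * os_mnorm V m X"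
proof -
  have "\<forall>ij\<in>{..<n}\<times>{..<n}. \<exists>K\<ge>0. \<forall>x\<in>os_carrier V. cmod (F (fst ij) (snd ij) x) \<le> K * os_mnorm V 1 (\<lambda>_ _. x)"
    using dual_bound[OF V mat_in_dual[OF F]] by auto
  then obtain Kf where Kf: "\<And>ij. ij \<in> {..<n}\<times>{..<n} \<Longrightarrow> 0 \<le> Kf ij \<and> (\<forall>x\<in>os_carrier V. cmod (F (fst ij) (snd ij) x) \<le> Kf ij * os_mnorm V 1 (\<lambda>_ _. x))"
    by metis
  define Kt where "Kt = (\<Sum>i<n. \<Sum>j<n. Kf (i,j))"
  have Kt0: "0 \<le> Kt" unfolding Kt_def using Kf by (auto intro!: sum_nonneg)
  show ?thesis
  proof (intro exI[of _ Kt] conjI allI impI Kt0)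
    fix m X assume X: "mat_in V m X"
    have X0: "0 \<le> os_mnorm V m X" by (rule wk_nonneg[OF V X])
    show "cmat_norm (n*m) (n*m) (kron m F X) \<le> Kt * os_mnorm V m X"
    proof (rule cm_le)
      show "0 \<le> Kt * os_mnorm V m X" using Kt0 X0 by simp
      fix u v
      have "cmod (bil (n*m) (n*m) (kron m F X) u v)
          \<le> (\<Sum>i<n. \<Sum>j<n. cmod (F i j (mtriple V m (\<lambda>_ k. cnj (u (i*m+k))) X (\<lambda>l _. v (j*m+l)) 0 0)))"
        unfolding kron_bil[OF V F X] by (rule order.trans[OF norm_sum sum_mono[OF norm_sum]])
      also have "\<dots> \<le> (\<Sum>i<n. \<Sum>j<n. Kf (i,j) * (nrm (\<lambda>k. u (i*m+k)) m * os_mnorm V m X * nrm (\<lambda>l. v (j*m+l)) m))"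
        using Kf by (intro sum_mono single_bound[OF V mat_in_dual[OF F] X]) auto
      also have "\<dots> \<le> (\<Sum>i<n. \<Sum>j<n. Kf (i,j) * (nrm u (n*m) * os_mnorm V m X * nrm v (n*m)))"
        using Kf X0 nrm_block
        by (intro sum_mono mult_left_mono mult_mono) (auto intro: mult_nonneg_nonneg)
      also have "\<dots> = (\<Sum>i<n. \<Sum>j<n. Kf (i,j)) * (nrm u (n*m) * os_mnorm V m X * nrm v (n*m))"
        by (simp only: sum_distrib_right)
      also have "\<dots> = Kt * os_mnorm V m X * nrm u (n*m) * nrm v (n*m)"
        unfolding Kt_def by (simp only: mult.commute mult.left_commute mult.assoc)
      finally show "cmod (bil (n*m) (n*m) (kron m F X) u v) \<le> Kt * os_mnorm V m X * nrm u (n*m) * nrm v (n*m)" .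
    qed
  qed
qed

definition dset :: "'a opsp \<Rightarrow> nat \<Rightarrow> (nat \<Rightarrow> nat \<Rightarrow> 'a \<Rightarrow> complex) \<Rightarrow> real set" where
  "dset V n F = {cmat_norm (n * m) (n * m) (kron m F X) | m X. 0 < m \<and> mat_in V m X \<and> os_mnorm V m X \<le> 1}"

lemma dual_mnorm_dset: "dual_mnorm V n F = Sup (insert 0 (dset V n F))"
  unfolding dual_mnorm_def dset_def ..

lemma dset_bdd: assumes V: "wk V" and F: "mat_in (dual V) n F" shows "bdd_above (insert 0 (dset V n F))"
proof -
  obtain K where K0: "0 \<le> K" and K: "\<And>m X. mat_in V m X \<Longrightarrow> cmat_norm (n*m) (n*m) (kron m F X) \<le> K * os_mnorm V m X"
    using kron_bound[OF V F] by blast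
  have "x \<le> K" if "x \<in> insert 0 (dset V n F)" for x
  proof -
    { fix m X assume "mat_in V m X" "os_mnorm V m X \<le> 1"
      then have "cmat_norm (n*m) (n*m) (kron m F X) \<le> K"
        using K[of m X] K0 mult_left_le[of "os_mnorm V m X" K] by linarith }
    then show ?thesis using that K0 unfolding dset_def by auto
  qed
  then show ?thesis unfolding bdd_above_def by blast
qed

lemma dual_upper: assumes V: "wk V" and F: "mat_in (dual V) n F"
  and "0 < m" "mat_in V m X" "os_mnorm V m X \<le> 1"
  shows "cmat_norm (n * m) (n * m) (kron m F X) \<le> dual_mnorm V n F"
  unfolding dual_mnorm_dset by (rule cSup_upper[OF _ dset_bdd[OF V F]]) (use assms in \<open>auto simp: dset_def\<close>)

lemma dual_nonneg: assumes V: "wk V" and F: "mat_in (dual V) n F" shows "0 \<le> dual_mnorm V n F"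
  unfolding dual_mnorm_dset by (rule cSup_upper[OF _ dset_bdd[OF V F]]) auto

lemma dual_least: assumes "0 \<le> M"
  and "\<And>m X. 0 < m \<Longrightarrow> mat_in V m X \<Longrightarrow> os_mnorm V m X \<le> 1 \<Longrightarrow> cmat_norm (n * m) (n * m) (kron m F X) \<le> M"
  shows "dual_mnorm V n F \<le> M"
  unfolding dual_mnorm_dset by (rule cSup_least) (use assms in \<open>auto simp: dset_def\<close>)

lemma cm_adj: "cmat_norm c r (\<lambda>i j. cnj (A j i)) \<le> cmat_norm r c A"
proof (rule cm_le[OF cm_nonneg])
  fix u v
  have "bil c r (\<lambda>i j. cnj (A j i)) u v = cnj (bil r c A v u)"
    by (simp add: bil_def mv_def cnj_sum sum_distrib_left sum_distrib_right mult_ac sum.swap[of _ "{..<c}" "{..<r}"])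
  then show "cmod (bil c r (\<lambda>i j. cnj (A j i)) u v) \<le> cmat_norm r c A * nrm u c * nrm v r"
    using cm_bil[of r c A v u] by (simp add: mult_ac)
qed

lemma blockvec:
  fixes r c q :: nat
  shows "nrm (\<lambda>p. \<Sum>j<c. B (p div q) j * v (j*q + p mod q)) (r*q) \<le> cmat_norm r c B * nrm v (c*q)"
proof -
  let ?w = "\<lambda>l j. v (j*q+l)"
  have "(nrm (\<lambda>p. \<Sum>j<c. B (p div q) j * v (j*q + p mod q)) (r*q))\<^sup>2
      = (\<Sum>p<r*q. (cmod (\<Sum>j<c. B (p div q) j * v (j*q + p mod q)))\<^sup>2)"
    by (simp add: nrm_def L2_set_def sum_nonneg)
  also have "\<dots> = (\<Sum>b<r. \<Sum>l<q. (cmod (mv B c (?w l) b))\<^sup>2)"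
    unfolding sum_split_divmod by (intro sum.cong refl) (simp add: mv_def)
  also have "\<dots> = (\<Sum>l<q. (nrm (mv B c (?w l)) r)\<^sup>2)"
    by (subst sum.swap) (simp add: nrm_def L2_set_def sum_nonneg)
  also have "\<dots> \<le> (\<Sum>l<q. (cmat_norm r c B * nrm (?w l) c)\<^sup>2)"
    by (intro sum_mono power_mono cm_upper) simp
  also have "\<dots> = (cmat_norm r c B)\<^sup>2 * (\<Sum>l<q. (nrm (?w l) c)\<^sup>2)"
    by (simp add: power_mult_distrib sum_distrib_left)
  also have "(\<Sum>l<q. (nrm (?w l) c)\<^sup>2) = (nrm v (c*q))\<^sup>2"
  proof -
    have "(\<Sum>l<q. (nrm (?w l) c)\<^sup>2) = (\<Sum>l<q. \<Sum>j<c. (cmod (v (j*q+l)))\<^sup>2)"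
      by (simp add: nrm_def L2_set_def sum_nonneg)
    also have "\<dots> = (\<Sum>j<c. \<Sum>l<q. (cmod (v (j*q+l)))\<^sup>2)" by (rule sum.swap)
    also have "\<dots> = (\<Sum>p<c*q. (cmod (v p))\<^sup>2)" by (rule sum_split_divmod[symmetric])
    finally show ?thesis by (simp add: nrm_def L2_set_def sum_nonneg)
  qed
  finally have "(nrm (\<lambda>p. \<Sum>j<c. B (p div q) j * v (j*q + p mod q)) (r*q))\<^sup>2 \<le> (cmat_norm r c B * nrm v (c*q))\<^sup>2"
    by (simp add: power_mult_distrib)
  then show ?thesis by (rule power2_le_imp_le) simp
qed

lemma adj_blockvec:
  fixes n m q :: nat
  shows "nrm (\<lambda>p. \<Sum>i<n. cnj (\<alpha> i (p div q)) * u (i*q + p mod q)) (m*q) \<le> cmat_norm n m \<alpha> * nrm u (n*q)"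
proof -
  have "nrm (\<lambda>p. \<Sum>i<n. cnj (\<alpha> i (p div q)) * u (i*q + p mod q)) (m*q) \<le> cmat_norm m n (\<lambda>a i. cnj (\<alpha> i a)) * nrm u (n*q)"
    by (rule blockvec[where B="\<lambda>a i. cnj (\<alpha> i a)" and c=n and v=u and r=m and q=q])
  also have "\<dots> \<le> cmat_norm n m \<alpha> * nrm u (n*q)"
    by (rule mult_right_mono[OF cm_adj nrm_nonneg])
  finally show ?thesis .
qed

lemma dual_carrier_zero: "(\<lambda>_. 0) \<in> dual_carrier V"
  unfolding dual_carrier_def lin_fun_def by (auto intro!: exI[of _ 0])

lemma dual_carrier_add: assumes "f \<in> dual_carrier V" "g \<in> dual_carrier V"
  shows "(\<lambda>x. f x + g x) \<in> dual_carrier V"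
proof -
  obtain K1 where K1: "\<forall>x\<in>os_carrier V. cmod (f x) \<le> K1 * os_mnorm V 1 (\<lambda>_ _. x)"
    using assms(1) unfolding dual_carrier_def by blast
  obtain K2 where K2: "\<forall>x\<in>os_carrier V. cmod (g x) \<le> K2 * os_mnorm V 1 (\<lambda>_ _. x)"
    using assms(2) unfolding dual_carrier_def by blast
  have "\<forall>x\<in>os_carrier V. cmod (f x + g x) \<le> (K1 + K2) * os_mnorm V 1 (\<lambda>_ _. x)"
  proof
    fix x assume x: "x \<in> os_carrier V"
    have "cmod (f x + g x) \<le> cmod (f x) + cmod (g x)" by (rule norm_triangle_ineq)
    also have "\<dots> \<le> (K1 + K2) * os_mnorm V 1 (\<lambda>_ _. x)" using K1 K2 x by (simp add: distrib_right add_mono)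
    finally show "cmod (f x + g x) \<le> (K1 + K2) * os_mnorm V 1 (\<lambda>_ _. x)" .
  qed
  moreover have "lin_fun V (\<lambda>x. f x + g x)" using dual_lin[OF assms(1)] dual_lin[OF assms(2)]
    unfolding lin_fun_def by (simp add: algebra_simps)
  ultimately show ?thesis using assms unfolding dual_carrier_def by auto
qed

lemma dual_carrier_smul: assumes "f \<in> dual_carrier V"
  shows "(\<lambda>x. c * f x) \<in> dual_carrier V"
proof -
  obtain K1 where K1: "\<forall>x\<in>os_carrier V. cmod (f x) \<le> K1 * os_mnorm V 1 (\<lambda>_ _. x)"
    using assms(1) unfolding dual_carrier_def by blast
  have "\<forall>x\<in>os_carrier V. cmod (c * f x) \<le> (cmod c * K1) * os_mnorm V 1 (\<lambda>_ _. x)"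
    using K1 by (simp add: norm_mult mult.assoc mult_left_mono)
  moreover have "lin_fun V (\<lambda>x. c * f x)" using dual_lin[OF assms(1)]
    unfolding lin_fun_def by (simp add: algebra_simps)
  ultimately show ?thesis using assms unfolding dual_carrier_def by auto
qed

lemma dual_mnorm_cong: assumes "\<And>i j. i < n \<Longrightarrow> j < n \<Longrightarrow> F i j = G i j"
  shows "dual_mnorm V n F = dual_mnorm V n G"
proof -
  have "cmat_norm (n*m) (n*m) (kron m F X) = cmat_norm (n*m) (n*m) (kron m G X)" for m X
    by (rule cm_cong) (simp add: assms div_lt)
  then show ?thesis unfolding dual_mnorm_dset dset_def by simp
qed

lemma bil_dual_mtriple:
  fixes n m q :: nat
  assumes F: "mat_in (dual V) m F"
  shows "bil (n*q) (n*q) (kron q (mtriple (dual V) m \<alpha> F \<beta>) X) u v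
    = bil (m*q) (m*q) (kron q F X) (\<lambda>p. \<Sum>i<n. cnj (\<alpha> i (p div q)) * u (i*q + p mod q))
                                   (\<lambda>p. \<Sum>j<n. \<beta> (p div q) j * v (j*q + p mod q))"
proof -
  have L: "bil (n*q) (n*q) (kron q (mtriple (dual V) m \<alpha> F \<beta>) X) u v =
    (\<Sum>i<n. \<Sum>k<q. cnj (u (i*q+k)) * (\<Sum>j<n. \<Sum>l<q. (\<Sum>a<m. \<Sum>b<m. \<alpha> i a * \<beta> b j * F a b (X k l)) * v (j*q+l)))"
    unfolding bil_def mv_def sum_split_divmod mtriple_dual by (intro sum.cong refl) simp
  have R: "bil (m*q) (m*q) (kron q F X) (\<lambda>p. \<Sum>i<n. cnj (\<alpha> i (p div q)) * u (i*q + p mod q))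
                                   (\<lambda>p. \<Sum>j<n. \<beta> (p div q) j * v (j*q + p mod q)) =
    (\<Sum>a<m. \<Sum>k<q. cnj (\<Sum>i<n. cnj (\<alpha> i a) * u (i*q+k)) * (\<Sum>b<m. \<Sum>l<q. F a b (X k l) * (\<Sum>j<n. \<beta> b j * v (j*q+l))))"
    unfolding bil_def mv_def sum_split_divmod by (intro sum.cong refl) simp
  show ?thesis unfolding L R
    apply (simp add: sum_distrib_left sum_distrib_right cnj_sum sum.swap[of _ "{..<n}" "{..<q}"] sum.swap[of _ "{..<m}" "{..<q}"] sum.swap[of _ "{..<m}" "{..<n}"] mult_ac)
    apply (rule sum.cong[OF refl], rule sum.cong[OF refl], rule sum.swap)
    done
qed

lemma wk_dual: assumes V: "wk V" shows "wk (dual V)"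
proof -
  have M2: "dual_mnorm V n (mtriple (dual V) m \<alpha> F \<beta>) \<le> cmat_norm n m \<alpha> * dual_mnorm V m F * cmat_norm m n \<beta>"
    if F: "mat_in (dual V) m F" for n m \<alpha> F \<beta>
  proof (rule dual_least)
    have F0: "0 \<le> dual_mnorm V m F" by (rule dual_nonneg[OF V F])
    show "0 \<le> cmat_norm n m \<alpha> * dual_mnorm V m F * cmat_norm m n \<beta>" using F0 by simp
    fix q X assume q: "0 < q" and X: "mat_in V q X" and X1: "os_mnorm V q X \<le> 1"
    show "cmat_norm (n*q) (n*q) (kron q (mtriple (dual V) m \<alpha> F \<beta>) X) \<le> cmat_norm n m \<alpha> * dual_mnorm V m F * cmat_norm m n \<beta>"
    proof (rule cm_le)
      show "0 \<le> cmat_norm n m \<alpha> * dual_mnorm V m F * cmat_norm m n \<beta>" using F0 by simp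
      fix u v
      let ?u = "\<lambda>p. \<Sum>i<n. cnj (\<alpha> i (p div q)) * u (i*q + p mod q)"
      let ?v = "\<lambda>p. \<Sum>j<n. \<beta> (p div q) j * v (j*q + p mod q)"
      have nu: "nrm ?u (m*q) \<le> cmat_norm n m \<alpha> * nrm u (n*q)"
        by (rule adj_blockvec[where \<alpha>=\<alpha> and u=u and q=q and n=n and m=m])
      have nv: "nrm ?v (m*q) \<le> cmat_norm m n \<beta> * nrm v (n*q)"
        by (rule blockvec[where B="\<beta>" and c=n and v=v and r=m and q=q])
      have "cmod (bil (n*q) (n*q) (kron q (mtriple (dual V) m \<alpha> F \<beta>) X) u v)
          = cmod (bil (m*q) (m*q) (kron q F X) ?u ?v)" by (simp only: bil_dual_mtriple[OF F])
      also have "\<dots> \<le> cmat_norm (m*q) (m*q) (kron q F X) * nrm ?u (m*q) * nrm ?v (m*q)" by (rule cm_bil)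
      also have "\<dots> \<le> dual_mnorm V m F * (cmat_norm n m \<alpha> * nrm u (n*q)) * (cmat_norm m n \<beta> * nrm v (n*q))"
        using dual_upper[OF V F q X X1] nu nv F0
        by (intro mult_mono) (auto intro: mult_nonneg_nonneg)
      finally show "cmod (bil (n*q) (n*q) (kron q (mtriple (dual V) m \<alpha> F \<beta>) X) u v)
          \<le> cmat_norm n m \<alpha> * dual_mnorm V m F * cmat_norm m n \<beta> * nrm u (n*q) * nrm v (n*q)"
        by (simp add: mult_ac)
    qed
  qed
  show ?thesis unfolding wk_def
  proof (intro conjI allI impI ballI)
    show "os_zero (dual V) \<in> os_carrier (dual V)" by (simp add: dual_def dual_carrier_zero)
    show "os_add (dual V) x y \<in> os_carrier (dual V)" if "x \<in> os_carrier (dual V)" "y \<in> os_carrier (dual V)" for x y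
      using that by (simp add: dual_def dual_carrier_add)
    show "os_smul (dual V) c x \<in> os_carrier (dual V)" if "x \<in> os_carrier (dual V)" for c x
      using that by (simp add: dual_def dual_carrier_smul)
    show "os_add (dual V) (os_zero (dual V)) x = x" for x by (simp add: dual_def)
    show "os_mnorm (dual V) n X = os_mnorm (dual V) n Y" if "\<forall>i<n. \<forall>j<n. X i j = Y i j" for n X Y
      using that by (simp add: dual_def) (rule dual_mnorm_cong, blast)
    show "0 \<le> os_mnorm (dual V) n X" if "mat_in (dual V) n X" for n X
      using that dual_nonneg[OF V] by (simp add: dual_def)
    show "os_mnorm (dual V) n (mtriple (dual V) m \<alpha> X \<beta>) \<le> cmat_norm n m \<alpha> * os_mnorm (dual V) m X * cmat_norm m n \<beta>"
      if "mat_in (dual V) m X" for n m \<alpha> X \<beta>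
      using M2[OF that] by (simp add: dual_def)
  qed
qed

lemma dual_simps[simp]: "os_carrier (dual V) = dual_carrier V" "os_mnorm (dual V) = dual_mnorm V"
  "os_add (dual V) = (\<lambda>f g x. f x + g x)" "os_smul (dual V) = (\<lambda>c f x. c * f x)" "os_zero (dual V) = (\<lambda>_. 0)"
  by (simp_all add: dual_def)

lemma lincomb_dual: "lincomb (dual V) cs bs = (\<lambda>x. \<Sum>k<length bs. cs!k * (bs!k) x)"
  unfolding lincomb_def vsumN_dual by simp

lemma cm11: "cmat_norm 1 1 (\<lambda>_ _. c) = cmod c"
proof (rule antisym)
  show "cmat_norm 1 1 (\<lambda>_ _. c) \<le> cmod c"
  proof (rule cm_le)
    fix u v
    show "cmod (bil 1 1 (\<lambda>_ _. c) u v) \<le> cmod c * nrm u 1 * nrm v 1"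
      by (simp add: bil_def mv_def nrm_def L2_set_def lessThan_Suc norm_mult)
  qed simp
  have "nrm (mv (\<lambda>_ _. c) 1 (\<lambda>_. 1)) 1 \<le> cmat_norm 1 1 (\<lambda>_ _. c)"
    by (rule cm_upper1) (simp add: nrm_def L2_set_def lessThan_Suc)
  then show "cmod c \<le> cmat_norm 1 1 (\<lambda>_ _. c)"
    by (simp add: mv_def nrm_def L2_set_def lessThan_Suc)
qed

lemma mtriple11: assumes "wk V" "z \<in> os_carrier V"
  shows "mtriple V 1 (\<lambda>_ _. a) (\<lambda>_ _. z) (\<lambda>_ _. 1) 0 0 = os_smul V a z"
  using assms by (simp add: mtriple_def wk_zl wk_smul)

lemma eval_bound:
  assumes V: "wk V" and g: "g \<in> dual_carrier V" and z: "z \<in> os_carrier V"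
  shows "cmod (g z) \<le> dual_mnorm V 1 (\<lambda>_ _. g) * os_mnorm V 1 (\<lambda>_ _. z)"
proof -
  let ?N = "os_mnorm V 1 (\<lambda>_ _. z)"
  have N0: "0 \<le> ?N" using wk_nonneg[OF V] z by (simp add: mat_in_def)
  have gin: "mat_in (dual V) 1 (\<lambda>_ _. g)" using g by (simp add: mat_in_def)
  have G0: "0 \<le> dual_mnorm V 1 (\<lambda>_ _. g)" by (rule dual_nonneg[OF V gin])
  show ?thesis
  proof (cases "?N = 0")
    case True
    obtain K where "\<forall>x\<in>os_carrier V. cmod (g x) \<le> K * os_mnorm V 1 (\<lambda>_ _. x)"
      using g unfolding dual_carrier_def by blast
    then have "cmod (g z) \<le> 0" using z True by force
    then show ?thesis using True by simp
  next
    case False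
    then have Np: "0 < ?N" using N0 by linarith
    define s where "s = 1 / ?N"
    have s0: "0 < s" using Np by (simp add: s_def)
    let ?z = "os_smul V (complex_of_real s) z"
    have zin: "?z \<in> os_carrier V" by (rule wk_smul[OF V z])
    have "os_mnorm V 1 (\<lambda>_ _. ?z) = os_mnorm V 1 (mtriple V 1 (\<lambda>_ _. complex_of_real s) (\<lambda>_ _. z) (\<lambda>_ _. 1))"
      by (rule wk_cong[OF V]) (use mtriple11[OF V z] in simp)
    also have "\<dots> \<le> cmat_norm 1 1 (\<lambda>_ _. complex_of_real s) * ?N * cmat_norm 1 1 (\<lambda>_ _. 1)"
      by (rule wk_M2[OF V]) (simp add: mat_in_def z)
    also have "\<dots> = 1"
    proof -
      have c1: "cmat_norm 1 1 (\<lambda>_ _. complex_of_real s) = s" by (simp only: cm11) (use s0 in simp)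
      have c2: "cmat_norm 1 1 (\<lambda>_ _. 1::complex) = 1" by (simp only: cm11) simp
      show ?thesis by (simp only: c1 c2) (use Np in \<open>simp add: s_def\<close>)
    qed
    finally have z1: "os_mnorm V 1 (\<lambda>_ _. ?z) \<le> 1" .
    have "cmat_norm (1*1) (1*1) (kron 1 (\<lambda>_ _. g) (\<lambda>_ _. ?z)) \<le> dual_mnorm V 1 (\<lambda>_ _. g)"
      by (rule dual_upper[OF V gin]) (use zin z1 in \<open>auto simp: mat_in_def\<close>)
    moreover have "cmat_norm (1*1) (1*1) (kron 1 (\<lambda>_ _. g) (\<lambda>_ _. ?z)) = s * cmod (g z)"
      using cm11[of "g ?z"] s0 by (simp add: lin_smul[OF dual_lin[OF g] z] norm_mult)
    ultimately have "s * cmod (g z) \<le> dual_mnorm V 1 (\<lambda>_ _. g)" by simp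
    then show ?thesis using Np by (simp add: s_def field_simps)
  qed
qed

lemma kappa_eq: "f \<in> dual_carrier V \<Longrightarrow> kappa V x f = f x"
  by (simp add: kappa_def)

lemma kappa_in:
  assumes V: "wk V" and x: "x \<in> os_carrier V"
  shows "kappa V x \<in> dual_carrier (dual V)"
proof -
  have lin: "lin_fun (dual V) (kappa V x)"
    unfolding lin_fun_def by (simp add: kappa_def dual_carrier_add dual_carrier_smul)
  have "\<forall>f\<in>os_carrier (dual V). cmod (kappa V x f) \<le> os_mnorm V 1 (\<lambda>_ _. x) * os_mnorm (dual V) 1 (\<lambda>_ _. f)"
    using eval_bound[OF V _ x] by (simp add: kappa_def mult.commute)
  moreover have "\<forall>f. f \<notin> os_carrier (dual V) \<longrightarrow> kappa V x f = 0" by (simp add: kappa_def)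
  ultimately show ?thesis using lin unfolding dual_carrier_def by blast
qed

lemma kappa_add: assumes "x \<in> os_carrier V" "y \<in> os_carrier V"
  shows "kappa V (os_add V x y) = (\<lambda>f. kappa V x f + kappa V y f)"
  using assms by (auto simp: kappa_def fun_eq_iff dest!: dual_lin simp: lin_fun_def)

lemma kappa_smul: assumes "x \<in> os_carrier V"
  shows "kappa V (os_smul V c x) = (\<lambda>f. c * kappa V x f)"
  using assms by (auto simp: kappa_def fun_eq_iff dest!: dual_lin simp: lin_fun_def)

lemma kappa_zero: assumes "wk V" shows "kappa V (os_zero V) = (\<lambda>_. 0)"
  using assms by (auto simp: kappa_def fun_eq_iff dest!: dual_lin intro: lin_zero)

lemma kappa_norm:
  assumes V: "wk V" and n: "0 < n" and X: "mat_in V n X" and X1: "os_mnorm V n X \<le> 1"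
  shows "dual_mnorm (dual V) n (\<lambda>i j. kappa V (X i j)) \<le> 1"
proof (rule dual_least)
  fix q W assume q: "0 < q" and W: "mat_in (dual V) q W" and W1: "os_mnorm (dual V) q W \<le> 1"
  have Wc: "W k l \<in> dual_carrier V" if "k < q" "l < q" for k l using W that by (simp add: mat_in_def)
  have "cmat_norm (n*q) (n*q) (kron q (\<lambda>i j. kappa V (X i j)) W)
      = cmat_norm (n*q) (n*q) (\<lambda>p p'. (\<lambda>i j k l. W k l (X i j)) (p div q) (p' div q) (p mod q) (p' mod q))"
    by (rule cm_cong) (simp add: kappa_eq Wc q)
  also have "\<dots> = cmat_norm (q*n) (q*n) (\<lambda>p p'. (\<lambda>i j k l. W k l (X i j)) (p mod n) (p' mod n) (p div n) (p' div n))"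
    by (rule cm_swap)
  also have "\<dots> \<le> dual_mnorm V q W" by (rule dual_upper[OF V _ n X X1]) (use W in simp)
  also have "\<dots> \<le> 1" using W1 by simp
  finally show "cmat_norm (n*q) (n*q) (kron q (\<lambda>i j. kappa V (X i j)) W) \<le> 1" .
qed simp

definition ev :: "'a opsp \<Rightarrow> (('a \<Rightarrow> complex) \<Rightarrow> ((('a \<Rightarrow> complex) \<Rightarrow> complex) \<Rightarrow> complex))
   \<Rightarrow> (('a \<Rightarrow> complex) \<Rightarrow> complex) \<Rightarrow> ('a \<Rightarrow> complex) \<Rightarrow> complex" where
  "ev E \<psi> z = (\<lambda>f. if f \<in> dual_carrier E then \<psi> f z else 0)"

lemma linmap_in: "lin_map V W \<psi> \<Longrightarrow> x \<in> os_carrier V \<Longrightarrow> \<psi> x \<in> os_carrier W"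
  unfolding lin_map_def by blast
lemma linmap_add: "lin_map V W \<psi> \<Longrightarrow> x \<in> os_carrier V \<Longrightarrow> y \<in> os_carrier V \<Longrightarrow> \<psi> (os_add V x y) = os_add W (\<psi> x) (\<psi> y)"
  unfolding lin_map_def by blast
lemma linmap_smul: "lin_map V W \<psi> \<Longrightarrow> x \<in> os_carrier V \<Longrightarrow> \<psi> (os_smul V c x) = os_smul W c (\<psi> x)"
  unfolding lin_map_def by blast

lemma ev_in:
  assumes E: "wk E" and L: "lin_map (dual E) (dual (dual (dual E))) \<psi>"
    and CB: "cb_le (dual E) (dual (dual (dual E))) C \<psi>" and z: "z \<in> dual_carrier (dual E)"
  shows "ev E \<psi> z \<in> dual_carrier (dual E)"
proof -
  have E1: "wk (dual E)" by (rule wk_dual[OF E])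
  have E2: "wk (dual (dual E))" by (rule wk_dual[OF E1])
  have lin: "lin_fun (dual E) (ev E \<psi> z)"
    unfolding lin_fun_def
  proof (intro conjI ballI allI)
    fix f g assume f: "f \<in> os_carrier (dual E)" and g: "g \<in> os_carrier (dual E)"
    have "\<psi> (os_add (dual E) f g) = os_add (dual (dual (dual E))) (\<psi> f) (\<psi> g)" by (rule linmap_add[OF L f g])
    then show "ev E \<psi> z (os_add (dual E) f g) = ev E \<psi> z f + ev E \<psi> z g"
      using f g by (simp add: ev_def dual_carrier_add)
  next
    fix c f assume f: "f \<in> os_carrier (dual E)"
    have "\<psi> (os_smul (dual E) c f) = os_smul (dual (dual (dual E))) c (\<psi> f)" by (rule linmap_smul[OF L f])
    then show "ev E \<psi> z (os_smul (dual E) c f) = c * ev E \<psi> z f"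
      using f by (simp add: ev_def dual_carrier_smul)
  qed
  have bnd: "\<forall>f\<in>os_carrier (dual E). cmod (ev E \<psi> z f) \<le> (C * dual_mnorm (dual E) 1 (\<lambda>_ _. z)) * os_mnorm (dual E) 1 (\<lambda>_ _. f)"
  proof
    fix f assume f: "f \<in> os_carrier (dual E)"
    have pf: "\<psi> f \<in> dual_carrier (dual (dual E))" using linmap_in[OF L f] by simp
    have "cmod (\<psi> f z) \<le> dual_mnorm (dual (dual E)) 1 (\<lambda>_ _. \<psi> f) * os_mnorm (dual (dual E)) 1 (\<lambda>_ _. z)"
      by (rule eval_bound[OF E2 pf]) (use z in simp)
    also have "\<dots> \<le> (C * dual_mnorm E 1 (\<lambda>_ _. f)) * os_mnorm (dual (dual E)) 1 (\<lambda>_ _. z)"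
    proof (rule mult_right_mono)
      have "os_mnorm (dual (dual (dual E))) 1 (\<lambda>i j. \<psi> ((\<lambda>_ _. f) i j)) \<le> C * os_mnorm (dual E) 1 (\<lambda>_ _. f)"
        using CB f unfolding cb_le_def by (simp add: mat_in_def)
      then show "dual_mnorm (dual (dual E)) 1 (\<lambda>_ _. \<psi> f) \<le> C * dual_mnorm E 1 (\<lambda>_ _. f)" by simp
      show "0 \<le> os_mnorm (dual (dual E)) 1 (\<lambda>_ _. z)" using dual_nonneg[OF E1, of 1 "\<lambda>_ _. z"] z by (simp add: mat_in_def)
    qed
    finally show "cmod (ev E \<psi> z f) \<le> (C * dual_mnorm (dual E) 1 (\<lambda>_ _. z)) * os_mnorm (dual E) 1 (\<lambda>_ _. f)"
      using f by (simp add: ev_def mult_ac)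
  qed
  show ?thesis unfolding dual_carrier_def using lin bnd by (auto simp: ev_def)
qed

lemma phi_linmap:
  assumes E: "wk E" and L: "lin_map (dual E) (dual (dual (dual E))) \<psi>"
    and CB: "cb_le (dual E) (dual (dual (dual E))) C \<psi>"
  shows "lin_map E (dual (dual E)) (\<lambda>x. ev E \<psi> (kappa E x))"
  unfolding lin_map_def
proof (intro conjI ballI allI)
  fix x assume x: "x \<in> os_carrier E"
  show "ev E \<psi> (kappa E x) \<in> os_carrier (dual (dual E))"
    using ev_in[OF E L CB kappa_in[OF E x]] by simp
next
  fix x y assume x: "x \<in> os_carrier E" and y: "y \<in> os_carrier E"
  have kx: "kappa E x \<in> os_carrier (dual (dual E))" using kappa_in[OF E x] by simp
  have ky: "kappa E y \<in> os_carrier (dual (dual E))" using kappa_in[OF E y] by simp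
  show "ev E \<psi> (kappa E (os_add E x y)) = os_add (dual (dual E)) (ev E \<psi> (kappa E x)) (ev E \<psi> (kappa E y))"
  proof (rule ext)
    fix f show "ev E \<psi> (kappa E (os_add E x y)) f = os_add (dual (dual E)) (ev E \<psi> (kappa E x)) (ev E \<psi> (kappa E y)) f"
    proof (cases "f \<in> dual_carrier E")
      case True
      have "lin_fun (dual (dual E)) (\<psi> f)" using linmap_in[OF L, of f] True by (simp add: dual_lin)
      then have "\<psi> f (os_add (dual (dual E)) (kappa E x) (kappa E y)) = \<psi> f (kappa E x) + \<psi> f (kappa E y)"
        using kx ky unfolding lin_fun_def by blast
      then show ?thesis using True by (simp add: ev_def kappa_add[OF x y])
    qed (simp add: ev_def)
  qed
next
  fix c x assume x: "x \<in> os_carrier E"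
  have kx: "kappa E x \<in> os_carrier (dual (dual E))" using kappa_in[OF E x] by simp
  show "ev E \<psi> (kappa E (os_smul E c x)) = os_smul (dual (dual E)) c (ev E \<psi> (kappa E x))"
  proof (rule ext)
    fix f show "ev E \<psi> (kappa E (os_smul E c x)) f = os_smul (dual (dual E)) c (ev E \<psi> (kappa E x)) f"
    proof (cases "f \<in> dual_carrier E")
      case True
      have "lin_fun (dual (dual E)) (\<psi> f)" using linmap_in[OF L, of f] True by (simp add: dual_lin)
      then have "\<psi> f (os_smul (dual (dual E)) c (kappa E x)) = c * \<psi> f (kappa E x)"
        using kx unfolding lin_fun_def by blast
      then show ?thesis using True by (simp add: ev_def kappa_smul[OF x])
    qed (simp add: ev_def)
  qed
qed

locale lspace =
  fixes Z :: "('b \<Rightarrow> complex) set"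
  assumes Z0: "(\<lambda>_. 0) \<in> Z"
    and Zadd: "x \<in> Z \<Longrightarrow> y \<in> Z \<Longrightarrow> (\<lambda>g. x g + y g) \<in> Z"
    and Zsmul: "x \<in> Z \<Longrightarrow> (\<lambda>g. c * x g) \<in> Z"
begin

definition linZ :: "(('b \<Rightarrow> complex) \<Rightarrow> complex) \<Rightarrow> bool" where
  "linZ b \<longleftrightarrow> (\<forall>x\<in>Z. \<forall>y\<in>Z. b (\<lambda>g. x g + y g) = b x + b y) \<and> (\<forall>c. \<forall>x\<in>Z. b (\<lambda>g. c * x g) = c * b x)"

lemma combo_in: "set zs \<subseteq> Z \<Longrightarrow> n \<le> length zs \<Longrightarrow> (\<lambda>g. \<Sum>j<n. t!j * (zs!j) g) \<in> Z"
proof (induction n)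
  case 0 then show ?case using Z0 by simp
next
  case (Suc n)
  have "zs ! n \<in> Z" using Suc.prems by auto
  then have "(\<lambda>g. (\<Sum>j<n. t!j * (zs!j) g) + t!n * (zs!n) g) \<in> Z"
    using Suc by (intro Zadd[of "\<lambda>g. \<Sum>j<n. t!j * (zs!j) g" "\<lambda>g. t!n * (zs!n) g", simplified] Zsmul) auto
  then show ?case by simp
qed

lemma linZ_add: "linZ b \<Longrightarrow> x \<in> Z \<Longrightarrow> y \<in> Z \<Longrightarrow> b (\<lambda>g. x g + y g) = b x + b y"
  unfolding linZ_def by blast

lemma linZ_smul: "linZ b \<Longrightarrow> x \<in> Z \<Longrightarrow> b (\<lambda>g. c * x g) = c * b x"
  unfolding linZ_def by blast

lemma linZ_zero: "linZ b \<Longrightarrow> b (\<lambda>_. 0) = 0"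
  using linZ_smul[of b "\<lambda>_. 0" 0] Z0 by simp

lemma combo_lin: "linZ b \<Longrightarrow> set zs \<subseteq> Z \<Longrightarrow> n \<le> length zs \<Longrightarrow> b (\<lambda>g. \<Sum>j<n. t!j * (zs!j) g) = (\<Sum>j<n. t!j * b (zs!j))"
proof (induction n)
  case 0 then show ?case using linZ_zero by simp
next
  case (Suc n)
  have zn: "zs ! n \<in> Z" using Suc.prems by auto
  have c: "(\<lambda>g. \<Sum>j<n. t!j * (zs!j) g) \<in> Z" using Suc.prems by (intro combo_in) auto
  have "b (\<lambda>g. \<Sum>j<Suc n. t!j * (zs!j) g) = b (\<lambda>g. (\<lambda>g. \<Sum>j<n. t!j * (zs!j) g) g + (\<lambda>g. t!n * (zs!n) g) g)" by simp
  also have "\<dots> = b (\<lambda>g. \<Sum>j<n. t!j * (zs!j) g) + b (\<lambda>g. t!n * (zs!n) g)"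
    by (rule linZ_add[OF Suc.prems(1) c Zsmul[OF zn]])
  also have "\<dots> = (\<Sum>j<n. t!j * b (zs!j)) + t!n * b (zs!n)"
    using Suc.IH Suc.prems linZ_smul[OF Suc.prems(1) zn] by simp
  also have "\<dots> = (\<Sum>j<Suc n. t!j * b (zs!j))" by simp
  finally show ?case .
qed

lemma fin_span:
  assumes "\<forall>b\<in>set bs. linZ b"
  shows "\<exists>zs. set zs \<subseteq> Z \<and> (\<forall>z\<in>Z. \<exists>t. length t = length zs \<and> (\<forall>b\<in>set bs. b z = (\<Sum>j<length zs. t!j * b (zs!j))))"
  using assms
proof (induction bs)
  case Nil then show ?case by (intro exI[of _ "[]"]) auto
next
  case (Cons b bs)
  then obtain zs where zsZ: "set zs \<subseteq> Z" and
    IH: "\<And>z. z \<in> Z \<Longrightarrow> \<exists>t. length t = length zs \<and> (\<forall>b\<in>set bs. b z = (\<Sum>j<length zs. t!j * b (zs!j)))"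
    by auto
  have lb: "linZ b" and lbs: "\<And>b'. b' \<in> set bs \<Longrightarrow> linZ b'" using Cons.prems by auto
  define res where "res z t = (\<lambda>g. z g + (-1) * (\<Sum>j<length zs. t!j * (zs!j) g))" for z t
  have resZ: "res z t \<in> Z" if "z \<in> Z" for z t
    unfolding res_def by (rule Zadd[OF that Zsmul[OF combo_in[OF zsZ order_refl]]])
  have resb: "b' (res z t) = b' z - (\<Sum>j<length zs. t!j * b' (zs!j))" if "linZ b'" "z \<in> Z" for b' z t
  proof -
    have c: "(\<lambda>g. \<Sum>j<length zs. t!j * (zs!j) g) \<in> Z" using combo_in[OF zsZ order_refl] .
    have "b' (res z t) = b' z + b' (\<lambda>g. (-1) * (\<Sum>j<length zs. t!j * (zs!j) g))"
      unfolding res_def by (rule linZ_add[OF that Zsmul[OF c]])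
    also have "b' (\<lambda>g. (-1) * (\<Sum>j<length zs. t!j * (zs!j) g)) = (-1) * b' (\<lambda>g. \<Sum>j<length zs. t!j * (zs!j) g)"
      by (rule linZ_smul[OF that(1) c])
    also have "b' (\<lambda>g. \<Sum>j<length zs. t!j * (zs!j) g) = (\<Sum>j<length zs. t!j * b' (zs!j))"
      by (rule combo_lin[OF that(1) zsZ order_refl])
    finally show ?thesis by simp
  qed
  show ?case
  proof (cases "\<exists>w\<in>Z. (\<forall>b'\<in>set bs. b' w = 0) \<and> b w \<noteq> 0")
    case True
    then obtain w where wZ: "w \<in> Z" and w0: "\<And>b'. b' \<in> set bs \<Longrightarrow> b' w = 0" and bw: "b w \<noteq> 0" by blast
    show ?thesis
    proof (intro exI[of _ "zs @ [w]"] conjI ballI)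
      show "set (zs @ [w]) \<subseteq> Z" using zsZ wZ by auto
      fix z assume z: "z \<in> Z"
      obtain t where lt: "length t = length zs" and t: "\<And>b'. b' \<in> set bs \<Longrightarrow> b' z = (\<Sum>j<length zs. t!j * b' (zs!j))"
        using IH[OF z] by blast
      define c where "c = b (res z t) / b w"
      have sumeq: "(\<Sum>j<length (zs @ [w]). (t @ [c])!j * b' ((zs @ [w])!j)) = (\<Sum>j<length zs. t!j * b' (zs!j)) + c * b' w" for b'
      proof -
        have "(\<Sum>j<length (zs @ [w]). (t @ [c])!j * b' ((zs @ [w])!j))
          = (\<Sum>j<length zs. (t @ [c])!j * b' ((zs @ [w])!j)) + (t @ [c])!(length zs) * b' ((zs @ [w])!(length zs))"
          by simp
        also have "(\<Sum>j<length zs. (t @ [c])!j * b' ((zs @ [w])!j)) = (\<Sum>j<length zs. t!j * b' (zs!j))"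
          by (rule sum.cong) (auto simp: nth_append lt)
        also have "(t @ [c])!(length zs) * b' ((zs @ [w])!(length zs)) = c * b' w"
          using lt by (metis nth_append_length)
        finally show ?thesis .
      qed
      show "\<exists>t'. length t' = length (zs @ [w]) \<and> (\<forall>b'\<in>set (b # bs). b' z = (\<Sum>j<length (zs @ [w]). t'!j * b' ((zs @ [w])!j)))"
      proof (intro exI[of _ "t @ [c]"] conjI ballI)
        show "length (t @ [c]) = length (zs @ [w])" using lt by simp
        fix b' assume b': "b' \<in> set (b # bs)"
        show "b' z = (\<Sum>j<length (zs @ [w]). (t @ [c])!j * b' ((zs @ [w])!j))"
        proof (cases "b' \<in> set bs")
          case True then show ?thesis unfolding sumeq by (simp add: t w0)
        next
          case False
          then have "b' = b" using b' by simp
          moreover have "b (res z t) = b z - (\<Sum>j<length zs. t!j * b (zs!j))" by (rule resb[OF lb z])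
          ultimately show ?thesis using bw unfolding sumeq by (simp add: c_def)
        qed
      qed
    qed
  next
    case False
    show ?thesis
    proof (intro exI[of _ zs] conjI ballI)
      show "set zs \<subseteq> Z" by (rule zsZ)
      fix z assume z: "z \<in> Z"
      obtain t where lt: "length t = length zs" and t: "\<And>b'. b' \<in> set bs \<Longrightarrow> b' z = (\<Sum>j<length zs. t!j * b' (zs!j))"
        using IH[OF z] by blast
      have "b' (res z t) = 0" if "b' \<in> set bs" for b'
        using resb[OF lbs[OF that] z, of t] t[OF that] by simp
      then have "b (res z t) = 0" using False resZ[OF z, of t] by blast
      then have "b z = (\<Sum>j<length zs. t!j * b (zs!j))" using resb[OF lb z, of t] by simp
      then show "\<exists>t. length t = length zs \<and> (\<forall>b\<in>set (b # bs). b z = (\<Sum>j<length zs. t!j * b (zs!j)))"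
        using lt t by (intro exI[of _ t]) auto
    qed
  qed
qed

end

lemma os_def0: assumes "operator_space V" "mat_in V n X"
  shows "(os_mnorm V n X = 0 \<longleftrightarrow> (\<forall>i<n. \<forall>j<n. X i j = os_zero V))"
proof -
  have "\<forall>n X. mat_in V n X \<longrightarrow> (os_mnorm V n X = 0 \<longleftrightarrow> (\<forall>i<n. \<forall>j<n. X i j = os_zero V))"
    using assms(1) unfolding operator_space_def by (elim conjE) assumption
  then show ?thesis using assms(2) by blast
qed

lemma os_hom: assumes "operator_space V" "mat_in V n X"
  shows "os_mnorm V n (\<lambda>i j. os_smul V c (X i j)) = cmod c * os_mnorm V n X"
proof -
  have "\<forall>n c X. mat_in V n X \<longrightarrow> os_mnorm V n (\<lambda>i j. os_smul V c (X i j)) = cmod c * os_mnorm V n X"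
    using assms(1) unfolding operator_space_def by (elim conjE) assumption
  then show ?thesis using assms(2) by blast
qed

lemma phi_finrank:
  assumes E: "wk E" and L: "lin_map (dual E) (dual (dual (dual E))) \<psi>"
    and CB: "cb_le (dual E) (dual (dual (dual E))) C \<psi>"
    and FR: "finite_rank (dual E) (dual (dual (dual E))) \<psi>"
  shows "finite_rank E (dual (dual E)) (\<lambda>x. ev E \<psi> (kappa E x))"
proof -
  obtain bs where bsC: "set bs \<subseteq> os_carrier (dual (dual (dual E)))" and
    rep: "\<forall>f\<in>os_carrier (dual E). \<exists>cs. length cs = length bs \<and> \<psi> f = lincomb (dual (dual (dual E))) cs bs"
    using FR unfolding finite_rank_def by blast
  interpret lspace "dual_carrier (dual E)"
    by unfold_locales (simp_all add: dual_carrier_zero dual_carrier_add dual_carrier_smul)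
  have lb: "\<forall>b\<in>set bs. linZ b"
  proof
    fix b assume "b \<in> set bs"
    then have "lin_fun (dual (dual E)) b" using bsC by (auto intro: dual_lin)
    then show "linZ b" unfolding linZ_def lin_fun_def by simp
  qed
  obtain zs where zsZ: "set zs \<subseteq> dual_carrier (dual E)" and
    sp: "\<And>z. z \<in> dual_carrier (dual E) \<Longrightarrow> \<exists>t. length t = length zs \<and> (\<forall>b\<in>set bs. b z = (\<Sum>j<length zs. t!j * b (zs!j)))"
    using fin_span[OF lb] by blast
  show ?thesis unfolding finite_rank_def
  proof (intro exI[of _ "map (ev E \<psi>) zs"] conjI ballI)
    show "set (map (ev E \<psi>) zs) \<subseteq> os_carrier (dual (dual E))" using ev_in[OF E L CB] zsZ by auto
    fix x assume x: "x \<in> os_carrier E"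
    have kx: "kappa E x \<in> dual_carrier (dual E)" by (rule kappa_in[OF E x])
    obtain t where lt: "length t = length zs" and tb: "\<And>b. b \<in> set bs \<Longrightarrow> b (kappa E x) = (\<Sum>j<length zs. t!j * b (zs!j))"
      using sp[OF kx] by blast
    show "\<exists>cs. length cs = length (map (ev E \<psi>) zs) \<and> ev E \<psi> (kappa E x) = lincomb (dual (dual E)) cs (map (ev E \<psi>) zs)"
    proof (intro exI[of _ t] conjI)
      show "length t = length (map (ev E \<psi>) zs)" using lt by simp
      show "ev E \<psi> (kappa E x) = lincomb (dual (dual E)) t (map (ev E \<psi>) zs)"
        unfolding lincomb_dual
      proof (rule ext)
        fix f
        show "ev E \<psi> (kappa E x) f = (\<Sum>k<length (map (ev E \<psi>) zs). t!k * (map (ev E \<psi>) zs ! k) f)"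
        proof (cases "f \<in> dual_carrier E")
          case True
          obtain cs where pf: "\<psi> f = lincomb (dual (dual (dual E))) cs bs" using rep True by auto
          have pf': "\<psi> f = (\<lambda>z. \<Sum>k<length bs. cs!k * (bs!k) z)" using pf by (simp add: lincomb_dual)
          have "ev E \<psi> (kappa E x) f = (\<Sum>k<length bs. cs!k * (bs!k) (kappa E x))" using True pf' by (simp add: ev_def)
          also have "\<dots> = (\<Sum>k<length bs. cs!k * (\<Sum>j<length zs. t!j * (bs!k) (zs!j)))"
            by (rule sum.cong[OF refl]) (use tb[OF nth_mem] in simp)
          also have "\<dots> = (\<Sum>k<length bs. \<Sum>j<length zs. t!j * (cs!k * (bs!k) (zs!j)))"
            by (simp add: sum_distrib_left mult_ac)
          also have "\<dots> = (\<Sum>j<length zs. \<Sum>k<length bs. t!j * (cs!k * (bs!k) (zs!j)))"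
            by (rule sum.swap)
          also have "\<dots> = (\<Sum>j<length zs. t!j * ev E \<psi> (zs!j) f)"
            using True pf' by (simp add: ev_def sum_distrib_left)
          finally show ?thesis by simp
        next
          case False then show ?thesis by (simp add: ev_def)
        qed
      qed
    qed
  qed
qed

lemma phi_cb:
  assumes OS: "operator_space E" and L: "lin_map (dual E) (dual (dual (dual E))) \<psi>"
    and CB: "cb_le (dual E) (dual (dual (dual E))) C \<psi>"
    and Cc: "0 \<le> C \<or> (\<forall>x\<in>os_carrier E. x = os_zero E)"
  shows "cb_le E (dual (dual E)) C (\<lambda>x. ev E \<psi> (kappa E x))"
  unfolding cb_le_def
proof (intro allI impI)
  fix n X assume X: "mat_in E n X"
  have E: "wk E" by (rule os_wk[OF OS])
  have E1: "wk (dual E)" by (rule wk_dual[OF E])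
  have E2: "wk (dual (dual E))" by (rule wk_dual[OF E1])
  have Xc: "X i j \<in> os_carrier E" if "i < n" "j < n" for i j using X that by (simp add: mat_in_def)
  let ?P = "\<lambda>i j. ev E \<psi> (kappa E (X i j))"
  have N0: "0 \<le> os_mnorm E n X" by (rule wk_nonneg[OF E X])
  show "os_mnorm (dual (dual E)) n ?P \<le> C * os_mnorm E n X"
  proof (cases "os_mnorm E n X = 0")
    case True
    then have X0: "\<And>i j. i < n \<Longrightarrow> j < n \<Longrightarrow> X i j = os_zero E" using os_def0[OF OS X] by blast
    have P0: "?P i j = (\<lambda>_. 0)" if "i < n" "j < n" for i j
    proof
      fix f
      show "?P i j f = 0"
      proof (cases "f \<in> dual_carrier E")
        case True
        have "\<psi> f \<in> dual_carrier (dual (dual E))" using linmap_in[OF L, of f] True by simp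
        then have "\<psi> f (os_zero (dual (dual E))) = 0" by (intro lin_zero[OF E2] dual_lin)
        then show ?thesis using True X0[OF that] kappa_zero[OF E] by (simp add: ev_def)
      qed (simp add: ev_def)
    qed
    have "dual_mnorm (dual E) n ?P \<le> 0"
    proof (rule dual_least)
      fix m Y
      have "cmat_norm (n*m) (n*m) (kron m ?P Y) = cmat_norm (n*m) (n*m) (\<lambda>_ _. 0)"
        by (rule cm_cong) (simp add: P0 div_lt)
      then show "cmat_norm (n*m) (n*m) (kron m ?P Y) \<le> 0" by (simp add: cm_zero)
    qed simp
    then show ?thesis using True by simp
  next
    case False
    then have Np: "0 < os_mnorm E n X" using N0 by linarith
    have n0: "0 < n"
    proof (rule ccontr)
      assume "\<not> 0 < n" then have "n = 0" by simp
      then have "os_mnorm E n X = 0" using os_def0[OF OS X] by simp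
      then show False using False by simp
    qed
    have C0: "0 \<le> C"
    proof (rule ccontr)
      assume "\<not> 0 \<le> C"
      then have "\<forall>x\<in>os_carrier E. x = os_zero E" using Cc by simp
      then have "os_mnorm E n X = 0" using os_def0[OF OS X] Xc by simp
      then show False using False by simp
    qed
    define N where "N = os_mnorm E n X"
    define s where "s = 1 / N"
    have s0: "0 < s" using Np by (simp add: s_def N_def)
    have "dual_mnorm (dual E) n ?P \<le> C * N"
    proof (rule dual_least)
      show "0 \<le> C * N" using C0 Np by (simp add: N_def)
      fix m Y assume m: "0 < m" and Y: "mat_in (dual E) m Y" and Y1: "os_mnorm (dual E) m Y \<le> 1"
      have Yc: "Y k l \<in> dual_carrier E" if "k < m" "l < m" for k l using Y that by (simp add: mat_in_def)
      define X' where "X' = (\<lambda>i j. os_smul E (complex_of_real s) (X i j))"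
      have X'in: "mat_in E n X'" unfolding X'_def mat_in_def using Xc wk_smul[OF E] by blast
      have cs: "cmod (complex_of_real s) = s" using s0 by simp
      have "os_mnorm E n X' = cmod (complex_of_real s) * N" unfolding X'_def N_def by (rule os_hom[OF OS X])
      also have "\<dots> = s * N" by (simp only: cs)
      also have "\<dots> = 1" using Np by (simp add: s_def N_def)
      finally have X'1: "os_mnorm E n X' \<le> 1" by simp
      define Z where "Z = (\<lambda>i j. kappa E (X' i j))"
      have Zin: "mat_in (dual (dual E)) n Z"
        unfolding Z_def mat_in_def using kappa_in[OF E] X'in by (simp add: mat_in_def)
      have Z1: "os_mnorm (dual (dual E)) n Z \<le> 1"
        unfolding Z_def using kappa_norm[OF E n0 X'in X'1] by simp
      have PY: "mat_in (dual (dual (dual E))) m (\<lambda>k l. \<psi> (Y k l))"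
        unfolding mat_in_def using linmap_in[OF L] Y by (simp add: mat_in_def)
      have b1: "cmat_norm (m*n) (m*n) (kron n (\<lambda>k l. \<psi> (Y k l)) Z) \<le> dual_mnorm (dual (dual E)) m (\<lambda>k l. \<psi> (Y k l))"
        by (rule dual_upper[OF E2 PY n0 Zin Z1])
      have "os_mnorm (dual (dual (dual E))) m (\<lambda>i j. \<psi> (Y i j)) \<le> C * os_mnorm (dual E) m Y"
        using CB Y unfolding cb_le_def by blast
      also have "\<dots> \<le> C" using mult_left_mono[OF Y1 C0] by simp
      finally have b2: "dual_mnorm (dual (dual E)) m (\<lambda>k l. \<psi> (Y k l)) \<le> C" by simp
      define G where "G = (\<lambda>i j k l. \<psi> (Y k l) (kappa E (X i j)))"
      have "cmat_norm (n*m) (n*m) (kron m ?P Y) = cmat_norm (n*m) (n*m) (\<lambda>p q. G (p div m) (q div m) (p mod m) (q mod m))"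
        by (rule cm_cong) (simp add: G_def ev_def Yc m)
      also have "\<dots> = cmat_norm (m*n) (m*n) (\<lambda>p q. G (p mod n) (q mod n) (p div n) (q div n))"
        by (rule cm_swap)
      finally have e1: "cmat_norm (n*m) (n*m) (kron m ?P Y) = cmat_norm (m*n) (m*n) (\<lambda>p q. G (p mod n) (q mod n) (p div n) (q div n))" .
      have ent: "\<psi> (Y k l) (Z i j) = complex_of_real s * G i j k l" if "k < m" "l < m" "i < n" "j < n" for i j k l
      proof -
        have pY: "\<psi> (Y k l) \<in> dual_carrier (dual (dual E))" using linmap_in[OF L, of "Y k l"] Yc[OF that(1,2)] by simp
        have kx: "kappa E (X i j) \<in> os_carrier (dual (dual E))" using kappa_in[OF E Xc[OF that(3,4)]] by simp
        have "Z i j = os_smul (dual (dual E)) (complex_of_real s) (kappa E (X i j))"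
          unfolding Z_def X'_def using kappa_smul[OF Xc[OF that(3,4)]] by simp
        then show ?thesis using lin_smul[OF dual_lin[OF pY] kx] by (simp add: G_def)
      qed
      have "cmat_norm (m*n) (m*n) (kron n (\<lambda>k l. \<psi> (Y k l)) Z)
          = cmat_norm (m*n) (m*n) (\<lambda>p q. complex_of_real s * G (p mod n) (q mod n) (p div n) (q div n))"
        by (rule cm_cong) (simp add: ent div_lt n0)
      also have "\<dots> = s * cmat_norm (m*n) (m*n) (\<lambda>p q. G (p mod n) (q mod n) (p div n) (q div n))"
        using s0 by (simp add: cm_scale)
      finally have "s * cmat_norm (n*m) (n*m) (kron m ?P Y) \<le> C" using b1 b2 e1 by simp
      then show "cmat_norm (n*m) (n*m) (kron m ?P Y) \<le> C * N"
        using Np by (simp add: s_def N_def field_simps)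
    qed
    then show ?thesis by (simp add: N_def)
  qed
qed

theorem proposition6p11:
  fixes E :: "'a opsp" and C :: real
  assumes "operator_space E"
    and "W_CBAP (dual E) C"
  shows "W_CBAP E C"
proof -
  have E: "wk E" by (rule os_wk[OF assms(1)])
  have E1: "wk (dual E)" by (rule wk_dual[OF E])
  have E2: "wk (dual (dual E))" by (rule wk_dual[OF E1])
  obtain F where Fnb: "F \<noteq> bot" and evF: "\<forall>\<^sub>F \<psi> in F. lin_map (dual E) (dual (dual (dual E))) \<psi> \<and> finite_rank (dual E) (dual (dual (dual E))) \<psi> \<and>
                  cb_le (dual E) (dual (dual (dual E))) C \<psi>"
    and conv: "\<forall>x\<in>os_carrier (dual E). \<forall>f\<in>dual_carrier (dual E). ((\<lambda>\<psi>. \<psi> x f) \<longlongrightarrow> kappa (dual E) x f) F"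
    using assms(2) unfolding W_CBAP_def by blast
  have Cc: "0 \<le> C \<or> (\<forall>x\<in>os_carrier E. x = os_zero E)"
  proof (rule disjCI)
    assume "\<not> (\<forall>x\<in>os_carrier E. x = os_zero E)"
    then obtain x where x: "x \<in> os_carrier E" and xz: "x \<noteq> os_zero E" by blast
    obtain f where f: "f \<in> dual_carrier E" and fx: "f x \<noteq> 0" using hb[OF assms(1) x xz] by blast
    obtain \<psi> where L: "lin_map (dual E) (dual (dual (dual E))) \<psi>" and CB: "cb_le (dual E) (dual (dual (dual E))) C \<psi>"
      using eventually_happens'[OF Fnb evF] by blast
    have fin: "mat_in (dual E) 1 (\<lambda>_ _. f)" using f by (simp add: mat_in_def)
    have fn0: "0 \<le> dual_mnorm E 1 (\<lambda>_ _. f)" by (rule dual_nonneg[OF E fin])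
    have xn0: "0 \<le> os_mnorm E 1 (\<lambda>_ _. x)" using wk_nonneg[OF E] x by (simp add: mat_in_def)
    have "0 < cmod (f x)" using fx by simp
    also have "cmod (f x) \<le> dual_mnorm E 1 (\<lambda>_ _. f) * os_mnorm E 1 (\<lambda>_ _. x)" by (rule eval_bound[OF E f x])
    finally have fnp: "0 < dual_mnorm E 1 (\<lambda>_ _. f)" using fn0 xn0
      by (metis mult_eq_0_iff order_le_less not_less_iff_gr_or_eq)
    have pfin: "mat_in (dual (dual (dual E))) 1 (\<lambda>_ _. \<psi> f)" using linmap_in[OF L, of f] f by (simp add: mat_in_def)
    have "0 \<le> os_mnorm (dual (dual (dual E))) 1 (\<lambda>_ _. \<psi> f)" using dual_nonneg[OF E2 pfin] by simp
    also have "\<dots> \<le> C * os_mnorm (dual E) 1 (\<lambda>_ _. f)" using CB fin unfolding cb_le_def by fastforce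
    finally have "0 \<le> C * dual_mnorm E 1 (\<lambda>_ _. f)" by simp
    then show "0 \<le> C" using fnp by (simp add: zero_le_mult_iff)
  qed
  show ?thesis unfolding W_CBAP_def
  proof (intro exI[of _ "filtermap (\<lambda>\<psi> x. ev E \<psi> (kappa E x)) F"] conjI ballI)
    show "filtermap (\<lambda>\<psi> x. ev E \<psi> (kappa E x)) F \<noteq> bot" using Fnb by (simp add: filtermap_bot_iff)
    show "\<forall>\<^sub>F \<phi> in filtermap (\<lambda>\<psi> x. ev E \<psi> (kappa E x)) F. lin_map E (dual (dual E)) \<phi> \<and> finite_rank E (dual (dual E)) \<phi> \<and> cb_le E (dual (dual E)) C \<phi>"
      unfolding eventually_filtermap using evF
      by (rule eventually_mono) (use phi_linmap[OF E] phi_finrank[OF E] phi_cb[OF assms(1) _ _ Cc] in blast)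
    fix x f assume x: "x \<in> os_carrier E" and f: "f \<in> dual_carrier E"
    have kx: "kappa E x \<in> dual_carrier (dual E)" by (rule kappa_in[OF E x])
    have c: "((\<lambda>\<psi>. \<psi> f (kappa E x)) \<longlongrightarrow> kappa (dual E) f (kappa E x)) F" using conv f kx by simp
    have e1: "kappa (dual E) f (kappa E x) = kappa E x f" using kx by (simp add: kappa_def)
    have e2: "(\<lambda>\<psi>. ev E \<psi> (kappa E x) f) = (\<lambda>\<psi>. \<psi> f (kappa E x))" using f by (simp add: ev_def)
    show "((\<lambda>\<phi>. \<phi> x f) \<longlongrightarrow> kappa E x f) (filtermap (\<lambda>\<psi> x. ev E \<psi> (kappa E x)) F)"
      unfolding filterlim_filtermap using c by (simp add: e1 e2)
  qed
qed

end
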